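(* Let $V$ be a unitary vertex operator superalgebra. Then there exist strong CFT type unitary simple vertex operator superalgebras $V^1,\dots,V^k$ (of the same central charge) such that $V$ is isomorphic to the direct sum vertex operator superalgebra $V^1\oplus\cdots\oplus V^k$.
   Context: A vertex operator superalgebra (VOSA) $(V,Y,\mathbf 1,\omega)$ has $L(n)=\omega_{n+1}$, grading $V=\bigoplus_{n\in\frac12\mathbb Z}V_n$ by $L(0)$-eigenvalues. A pair $(V,\phi)$ is a unitary VOSA if $\phi$ is an anti-linear involution of $V$ (anti-linear bijection of order 2 with $\phi(\mathbf 1)=\mathbf 1$, $\phi(\omega)=\omega$, $\phi(u_nv)=\phi(u)_n\phi(v)$) and there is a positive definite Hermitian form $(\,,)$ on $V$ with $(Y(e^{zL(1)}(-1)^{L(0)+2L(0)^2}z^{-2L(0)}a,z^{-1})u,v)=(u,Y(\phi(a),z)v)$ for all $a,u,v\in V$. $V$ is of strong CFT type if $V_0=\mathbb C\mathbf 1$, $V_n=0$ for $n<0$, and $L(1)V_1=0$. $V$ is simple if it has no ideals other than $0$ and $V$. The direct sum of VOSAs $V^1,\dots,V^k$ of equal central charge has underlying space $\bigoplus V^i$, componentwise vertex operators, vacuum $(\mathbf 1^1,\dots,\mathbf 1^k)$ and conformal vector $(\omega^1,\dots,\omega^k)$. *)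

theory Defs
  imports Complex_Main "HOL-Library.Function_Algebras"
begin

text \<open>A VOSA lives on a carrier subspace of an ambient additive group 'v, equipped with
  a complex scalar multiplication sc (a complex vector space structure).
  Y V a n b is the mode a_n b (n an integer); vac is the vacuum, cv the conformal vector.
  The L(0)-grading index h :: int stands for the weight h/2 (so weights range over 1/2 Z);
  the parity of a homogeneous vector of weight h/2 is h mod 2.\<close>

record 'v vosa =
  carrier :: "'v set"
  Y :: "'v \<Rightarrow> int \<Rightarrow> 'v \<Rightarrow> 'v"
  vac :: 'v
  cv :: 'v

definition fsum :: "(nat \<Rightarrow> 'a::comm_monoid_add) \<Rightarrow> 'a" where
  "fsum f = sum f {i. f i \<noteq> 0}"

definition gbin :: "int \<Rightarrow> nat \<Rightarrow> complex" where
  "gbin m i = (of_int m :: complex) gchoose i"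

definition sgn_int :: "int \<Rightarrow> complex" where
  "sgn_int k = (if even k then 1 else -1)"

definition Lop :: "'v vosa \<Rightarrow> int \<Rightarrow> 'v \<Rightarrow> 'v" where
  "Lop V n v = Y V (cv V) (n + 1) v"

definition wt :: "(complex \<Rightarrow> 'v::ab_group_add \<Rightarrow> 'v) \<Rightarrow> 'v vosa \<Rightarrow> int \<Rightarrow> 'v set" where
  "wt sc V h = {v \<in> carrier V. Lop V 0 v = sc (of_int h / 2) v}"

definition is_VOSA :: "(complex \<Rightarrow> 'v::ab_group_add \<Rightarrow> 'v) \<Rightarrow> 'v vosa \<Rightarrow> complex \<Rightarrow> bool" where
  "is_VOSA sc V c \<longleftrightarrow>
     vector_space sc \<and> module.subspace sc (carrier V) \<and>
     (\<forall>a\<in>carrier V. \<forall>n. \<forall>b\<in>carrier V. Y V a n b \<in> carrier V) \<and>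
     (\<forall>a\<in>carrier V. \<forall>n. \<forall>b1\<in>carrier V. \<forall>b2\<in>carrier V. \<forall>\<alpha>.
         Y V a n (sc \<alpha> b1 + b2) = sc \<alpha> (Y V a n b1) + Y V a n b2) \<and>
     (\<forall>a1\<in>carrier V. \<forall>a2\<in>carrier V. \<forall>n. \<forall>b\<in>carrier V. \<forall>\<alpha>.
         Y V (sc \<alpha> a1 + a2) n b = sc \<alpha> (Y V a1 n b) + Y V a2 n b) \<and>
     (\<forall>a\<in>carrier V. \<forall>b\<in>carrier V. \<exists>N. \<forall>n\<ge>N. Y V a n b = 0) \<and>
     vac V \<in> carrier V \<and>
     (\<forall>b\<in>carrier V. \<forall>n. Y V (vac V) n b = (if n = -1 then b else 0)) \<and>
     (\<forall>a\<in>carrier V. Y V a (-1) (vac V) = a \<and> (\<forall>n\<ge>0. Y V a n (vac V) = 0)) \<and>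
     cv V \<in> wt sc V 4 \<and>
     (\<forall>m n. \<forall>v\<in>carrier V.
         Lop V m (Lop V n v) - Lop V n (Lop V m v)
           = sc (of_int (m - n)) (Lop V (m + n) v)
             + (if m + n = 0 then sc (c / 12 * of_int (m ^ 3 - m)) v else 0)) \<and>
     (\<forall>a\<in>carrier V. \<forall>n. \<forall>b\<in>carrier V.
         Y V (Lop V (-1) a) n b = sc (- of_int n) (Y V a (n - 1) b)) \<and>
     carrier V \<subseteq> module.span sc (\<Union>h. wt sc V h) \<and>
     (\<forall>h. \<exists>S. finite S \<and> S \<subseteq> wt sc V h \<and> wt sc V h \<subseteq> module.span sc S) \<and>
     (\<exists>N. \<forall>h<N. wt sc V h = {0}) \<and>
     (\<forall>h1 h2. \<forall>a\<in>wt sc V h1. \<forall>b\<in>wt sc V h2. \<forall>u\<in>carrier V. \<forall>m n k::int.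
         fsum (\<lambda>i. sc (gbin m i) (Y V (Y V a (k + int i) b) (m + n - int i) u))
         = fsum (\<lambda>i. sc (sgn_int (int i) * gbin k i)
              (Y V a (m + k - int i) (Y V b (n + int i) u)
               - sc (sgn_int k * (if odd h1 \<and> odd h2 then -1 else 1))
                    (Y V b (n + k - int i) (Y V a (m + int i) u)))))"

definition antilinear_involution :: "(complex \<Rightarrow> 'v::ab_group_add \<Rightarrow> 'v) \<Rightarrow> 'v vosa \<Rightarrow> ('v \<Rightarrow> 'v) \<Rightarrow> bool" where
  "antilinear_involution sc V \<phi> \<longleftrightarrow>
     (\<forall>a\<in>carrier V. \<phi> a \<in> carrier V) \<and>
     (\<forall>a\<in>carrier V. \<forall>b\<in>carrier V. \<forall>\<alpha>. \<phi> (sc \<alpha> a + b) = sc (cnj \<alpha>) (\<phi> a) + \<phi> b) \<and>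
     (\<forall>a\<in>carrier V. \<phi> (\<phi> a) = a) \<and>
     \<phi> (vac V) = vac V \<and> \<phi> (cv V) = cv V \<and>
     (\<forall>a\<in>carrier V. \<forall>n. \<forall>b\<in>carrier V. \<phi> (Y V a n b) = Y V (\<phi> a) n (\<phi> b))"

definition pos_hermitian_form :: "(complex \<Rightarrow> 'v::ab_group_add \<Rightarrow> 'v) \<Rightarrow> 'v set \<Rightarrow> ('v \<Rightarrow> 'v \<Rightarrow> complex) \<Rightarrow> bool" where
  "pos_hermitian_form sc S B \<longleftrightarrow>
     (\<forall>u1\<in>S. \<forall>u2\<in>S. \<forall>v\<in>S. \<forall>\<alpha>. B (sc \<alpha> u1 + u2) v = \<alpha> * B u1 v + B u2 v) \<and>
     (\<forall>u\<in>S. \<forall>v\<in>S. B u v = cnj (B v u)) \<and>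
     (\<forall>v\<in>S. v \<noteq> 0 \<longrightarrow> 0 < Re (B v v))"

text \<open>Invariance (Y(e^{zL(1)}(-1)^{L(0)+2L(0)^2} z^{-2L(0)} a, z^{-1}) u, v) = (u, Y(phi a, z) v),
  written coefficientwise (coefficient of z^{-k-1}) for a homogeneous of weight h/2;
  then (-1)^{L(0)+2L(0)^2} a = (-1)^{h(h+1)/2} a and z^{-2L(0)} a = z^{-h} a.\<close>
definition invariant_form :: "(complex \<Rightarrow> 'v::ab_group_add \<Rightarrow> 'v) \<Rightarrow> 'v vosa \<Rightarrow> ('v \<Rightarrow> 'v) \<Rightarrow> ('v \<Rightarrow> 'v \<Rightarrow> complex) \<Rightarrow> bool" where
  "invariant_form sc V \<phi> B \<longleftrightarrow>
     (\<forall>h. \<forall>a\<in>wt sc V h. \<forall>u\<in>carrier V. \<forall>v\<in>carrier V. \<forall>k::int.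
        B u (Y V (\<phi> a) k v)
        = sgn_int (h * (h + 1) div 2) *
          fsum (\<lambda>j. (1 / of_nat (fact j)) * B (Y V ((Lop V 1 ^^ j) a) (h - k - 2 - int j) u) v))"

definition unitary_VOSA :: "(complex \<Rightarrow> 'v::ab_group_add \<Rightarrow> 'v) \<Rightarrow> 'v vosa \<Rightarrow> complex \<Rightarrow> ('v \<Rightarrow> 'v) \<Rightarrow> bool" where
  "unitary_VOSA sc V c \<phi> \<longleftrightarrow>
     is_VOSA sc V c \<and> antilinear_involution sc V \<phi> \<and>
     (\<exists>B. pos_hermitian_form sc (carrier V) B \<and> invariant_form sc V \<phi> B)"

definition strong_CFT_type :: "(complex \<Rightarrow> 'v::ab_group_add \<Rightarrow> 'v) \<Rightarrow> 'v vosa \<Rightarrow> bool" where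
  "strong_CFT_type sc V \<longleftrightarrow>
     wt sc V 0 = {sc \<alpha> (vac V) | \<alpha>. True} \<and>
     (\<forall>h<0. wt sc V h = {0}) \<and>
     (\<forall>v\<in>wt sc V 2. Lop V 1 v = 0)"

definition vosa_ideal :: "(complex \<Rightarrow> 'v::ab_group_add \<Rightarrow> 'v) \<Rightarrow> 'v vosa \<Rightarrow> 'v set \<Rightarrow> bool" where
  "vosa_ideal sc V I \<longleftrightarrow>
     I \<subseteq> carrier V \<and> module.subspace sc I \<and>
     (\<forall>a\<in>carrier V. \<forall>v\<in>I. \<forall>n. Y V a n v \<in> I \<and> Y V v n a \<in> I)"

definition simple_VOSA :: "(complex \<Rightarrow> 'v::ab_group_add \<Rightarrow> 'v) \<Rightarrow> 'v vosa \<Rightarrow> bool" where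
  "simple_VOSA sc V \<longleftrightarrow> (\<forall>I. vosa_ideal sc V I \<longrightarrow> I = {0} \<or> I = carrier V)"

text \<open>Direct sum V^0 + ... + V^(k-1), realised on finitely supported sequences.\<close>
definition dscale :: "(complex \<Rightarrow> 'v \<Rightarrow> 'v) \<Rightarrow> complex \<Rightarrow> (nat \<Rightarrow> 'v) \<Rightarrow> (nat \<Rightarrow> 'v)" where
  "dscale sc \<alpha> f = (\<lambda>i. sc \<alpha> (f i))"

definition dsum :: "nat \<Rightarrow> (nat \<Rightarrow> 'v::zero vosa) \<Rightarrow> (nat \<Rightarrow> 'v) vosa" where
  "dsum k Vs =
     \<lparr> carrier = {f. (\<forall>i<k. f i \<in> carrier (Vs i)) \<and> (\<forall>i\<ge>k. f i = 0)},
       Y = (\<lambda>f n g i. if i < k then Y (Vs i) (f i) n (g i) else 0),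
       vac = (\<lambda>i. if i < k then vac (Vs i) else 0),
       cv = (\<lambda>i. if i < k then cv (Vs i) else 0) \<rparr>"

definition vosa_iso :: "(complex \<Rightarrow> 'a::ab_group_add \<Rightarrow> 'a) \<Rightarrow> 'a vosa \<Rightarrow>
     (complex \<Rightarrow> 'b::ab_group_add \<Rightarrow> 'b) \<Rightarrow> 'b vosa \<Rightarrow> ('a \<Rightarrow> 'b) \<Rightarrow> bool" where
  "vosa_iso sc1 V sc2 W f \<longleftrightarrow>
     bij_betw f (carrier V) (carrier W) \<and>
     (\<forall>a\<in>carrier V. \<forall>b\<in>carrier V. \<forall>\<alpha>. f (sc1 \<alpha> a + b) = sc2 \<alpha> (f a) + f b) \<and>
     (\<forall>a\<in>carrier V. \<forall>n. \<forall>b\<in>carrier V. f (Y V a n b) = Y W (f a) n (f b)) \<and>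
     f (vac V) = vac W \<and> f (cv V) = cv W"

end

theory Submission
  imports Defs "HOL-Computational_Algebra.Fundamental_Theorem_Algebra"
begin


lemma fsum_eq_sum:
  assumes "finite A" "\<And>i. i \<notin> A \<Longrightarrow> f i = 0"
  shows "fsum f = sum f A"
proof -
  have "{i. f i \<noteq> 0} \<subseteq> A" using assms(2) by blast
  then show ?thesis unfolding fsum_def
    by (intro sum.mono_neutral_left[OF assms(1)]) auto
qed

lemma fsum_single:
  assumes "\<And>i. i \<noteq> 0 \<Longrightarrow> f i = 0"
  shows "fsum f = f 0"
  using fsum_eq_sum[of "{0}" f] assms by auto

lemma gbin_0_0[simp]: "gbin m 0 = 1" unfolding gbin_def by simp
lemma gbin_zero_pos: "i \<noteq> 0 \<Longrightarrow> gbin 0 i = 0"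
  unfolding gbin_def by (cases i) (auto simp: gbinomial_Suc)
lemma gbin_1_1[simp]: "gbin 1 1 = 1" unfolding gbin_def by simp
lemma gbin_one_big: "i \<ge> 2 \<Longrightarrow> gbin 1 i = 0"
proof -
  assume "i \<ge> 2"
  have "(of_int 1::complex) gchoose i = of_nat (Suc 0 choose i)" using binomial_gbinomial[of 1 i, where 'a=complex] by simp
  also have "\<dots> = 0" using \<open>i\<ge>2\<close> by (simp add: binomial_eq_0)
  finally show ?thesis unfolding gbin_def .
qed
lemma sgn_int_0[simp]: "sgn_int 0 = 1" unfolding sgn_int_def by simp

locale vosa = vector_space sc for sc :: "complex \<Rightarrow> 'v::ab_group_add \<Rightarrow> 'v" +
  fixes V :: "'v vosa" and c :: complex
  assumes VOSA: "is_VOSA sc V c"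
begin

lemmas VV1 = VOSA[unfolded is_VOSA_def, THEN conjunct1]
lemmas VV2 = VOSA[unfolded is_VOSA_def, THEN conjunct2, THEN conjunct1]
lemmas VV3 = VOSA[unfolded is_VOSA_def, THEN conjunct2, THEN conjunct2, THEN conjunct1]
lemmas VV4 = VOSA[unfolded is_VOSA_def, THEN conjunct2, THEN conjunct2, THEN conjunct2, THEN conjunct1]
lemmas VV5 = VOSA[unfolded is_VOSA_def, THEN conjunct2, THEN conjunct2, THEN conjunct2, THEN conjunct2, THEN conjunct1]
lemmas VV6 = VOSA[unfolded is_VOSA_def, THEN conjunct2, THEN conjunct2, THEN conjunct2, THEN conjunct2, THEN conjunct2, THEN conjunct1]
lemmas VV7 = VOSA[unfolded is_VOSA_def, THEN conjunct2, THEN conjunct2, THEN conjunct2, THEN conjunct2, THEN conjunct2, THEN conjunct2, THEN conjunct1]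
lemmas VV8 = VOSA[unfolded is_VOSA_def, THEN conjunct2, THEN conjunct2, THEN conjunct2, THEN conjunct2, THEN conjunct2, THEN conjunct2, THEN conjunct2, THEN conjunct1]
lemmas VV9 = VOSA[unfolded is_VOSA_def, THEN conjunct2, THEN conjunct2, THEN conjunct2, THEN conjunct2, THEN conjunct2, THEN conjunct2, THEN conjunct2, THEN conjunct2, THEN conjunct1]
lemmas VV10 = VOSA[unfolded is_VOSA_def, THEN conjunct2, THEN conjunct2, THEN conjunct2, THEN conjunct2, THEN conjunct2, THEN conjunct2, THEN conjunct2, THEN conjunct2, THEN conjunct2, THEN conjunct1]
lemmas VV11 = VOSA[unfolded is_VOSA_def, THEN conjunct2, THEN conjunct2, THEN conjunct2, THEN conjunct2, THEN conjunct2, THEN conjunct2, THEN conjunct2, THEN conjunct2, THEN conjunct2, THEN conjunct2, THEN conjunct1]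
lemmas VV12 = VOSA[unfolded is_VOSA_def, THEN conjunct2, THEN conjunct2, THEN conjunct2, THEN conjunct2, THEN conjunct2, THEN conjunct2, THEN conjunct2, THEN conjunct2, THEN conjunct2, THEN conjunct2, THEN conjunct2, THEN conjunct1]
lemmas VV13 = VOSA[unfolded is_VOSA_def, THEN conjunct2, THEN conjunct2, THEN conjunct2, THEN conjunct2, THEN conjunct2, THEN conjunct2, THEN conjunct2, THEN conjunct2, THEN conjunct2, THEN conjunct2, THEN conjunct2, THEN conjunct2, THEN conjunct1]
lemmas VV14 = VOSA[unfolded is_VOSA_def, THEN conjunct2, THEN conjunct2, THEN conjunct2, THEN conjunct2, THEN conjunct2, THEN conjunct2, THEN conjunct2, THEN conjunct2, THEN conjunct2, THEN conjunct2, THEN conjunct2, THEN conjunct2, THEN conjunct2, THEN conjunct1]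
lemmas VV15 = VOSA[unfolded is_VOSA_def, THEN conjunct2, THEN conjunct2, THEN conjunct2, THEN conjunct2, THEN conjunct2, THEN conjunct2, THEN conjunct2, THEN conjunct2, THEN conjunct2, THEN conjunct2, THEN conjunct2, THEN conjunct2, THEN conjunct2, THEN conjunct2, THEN conjunct1]
lemmas VV16 = VOSA[unfolded is_VOSA_def, THEN conjunct2, THEN conjunct2, THEN conjunct2, THEN conjunct2, THEN conjunct2, THEN conjunct2, THEN conjunct2, THEN conjunct2, THEN conjunct2, THEN conjunct2, THEN conjunct2, THEN conjunct2, THEN conjunct2, THEN conjunct2, THEN conjunct2]

abbreviation "C \<equiv> carrier V"
abbreviation "YY \<equiv> Y V"
abbreviation "one \<equiv> vac V"
abbreviation "om \<equiv> cv V"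
abbreviation "L \<equiv> Lop V"
abbreviation "W \<equiv> wt sc V"

lemma sub: "subspace C" using VV2 by blast
lemma Ycl: "a \<in> C \<Longrightarrow> b \<in> C \<Longrightarrow> YY a n b \<in> C" using VV3 by blast
lemma Ylin2: "a \<in> C \<Longrightarrow> b1 \<in> C \<Longrightarrow> b2 \<in> C \<Longrightarrow> YY a n (sc \<alpha> b1 + b2) = sc \<alpha> (YY a n b1) + YY a n b2"
  using VV4 by blast
lemma Ylin1: "a1 \<in> C \<Longrightarrow> a2 \<in> C \<Longrightarrow> b \<in> C \<Longrightarrow> YY (sc \<alpha> a1 + a2) n b = sc \<alpha> (YY a1 n b) + YY a2 n b"
  using VV5 by blast
lemma trunc: "a \<in> C \<Longrightarrow> b \<in> C \<Longrightarrow> \<exists>N. \<forall>n\<ge>N. YY a n b = 0"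
  using VV6 by blast
lemma vac_in: "one \<in> C" using VV7 by blast
lemma vac_Y: "b \<in> C \<Longrightarrow> YY one n b = (if n = -1 then b else 0)"
  using VV8 by blast
lemma creation: "a \<in> C \<Longrightarrow> YY a (-1) one = a"
  using VV9 by blast
lemma creation0: "a \<in> C \<Longrightarrow> n \<ge> 0 \<Longrightarrow> YY a n one = 0"
  using VV9 by blast
lemma cv_wt: "om \<in> W 4" using VV10 by blast
lemma vir: "v \<in> C \<Longrightarrow> L m (L n v) - L n (L m v)
           = sc (of_int (m - n)) (L (m + n) v)
             + (if m + n = 0 then sc (c / 12 * of_int (m ^ 3 - m)) v else 0)"
  using VV11 by blast
lemma deriv: "a \<in> C \<Longrightarrow> b \<in> C \<Longrightarrow> YY (L (-1) a) n b = sc (- of_int n) (YY a (n - 1) b)"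
  using VV12 by blast
lemma span_wt: "C \<subseteq> span (\<Union>h. W h)"
  using VV13 by blast
lemma fin_wt: "\<exists>S. finite S \<and> S \<subseteq> W h \<and> W h \<subseteq> span S"
  using VV14 by blast
lemma lowb: "\<exists>N. \<forall>h<N. W h = {0}"
  using VV15 by blast
lemma jacobi: "a \<in> W h1 \<Longrightarrow> b \<in> W h2 \<Longrightarrow> u \<in> C \<Longrightarrow>
         fsum (\<lambda>i. sc (gbin m i) (YY (YY a (k + int i) b) (m + n - int i) u))
         = fsum (\<lambda>i. sc (sgn_int (int i) * gbin k i)
              (YY a (m + k - int i) (YY b (n + int i) u)
               - sc (sgn_int k * (if odd h1 \<and> odd h2 then -1 else 1))
                    (YY b (n + k - int i) (YY a (m + int i) u))))"
  using VV16 by blast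

lemma om_in: "om \<in> C" using cv_wt unfolding wt_def by blast
lemma wt_sub: "W h \<subseteq> C" unfolding wt_def by blast
lemma wtD: "v \<in> W h \<Longrightarrow> v \<in> C \<and> L 0 v = sc (of_int h / 2) v" unfolding wt_def by blast
lemma wtI: "v \<in> C \<Longrightarrow> L 0 v = sc (of_int h / 2) v \<Longrightarrow> v \<in> W h" unfolding wt_def by blast

lemma C0: "0 \<in> C" using sub subspace_0 by blast
lemma Cadd: "x \<in> C \<Longrightarrow> y \<in> C \<Longrightarrow> x + y \<in> C" using sub subspace_add by blast
lemma Cscale: "x \<in> C \<Longrightarrow> sc a x \<in> C" using sub subspace_scale by blast
lemma Cdiff: "x \<in> C \<Longrightarrow> y \<in> C \<Longrightarrow> x - y \<in> C" using sub subspace_diff by blast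
lemma Cneg: "x \<in> C \<Longrightarrow> - x \<in> C" using sub subspace_neg by blast
lemma Csum: "(\<And>x. x \<in> A \<Longrightarrow> f x \<in> C) \<Longrightarrow> sum f A \<in> C" using sub subspace_sum by blast

lemma Y_add2: "a \<in> C \<Longrightarrow> b1 \<in> C \<Longrightarrow> b2 \<in> C \<Longrightarrow> YY a n (b1 + b2) = YY a n b1 + YY a n b2"
  using Ylin2[of a b1 b2 n 1] by simp
lemma Y_zero2[simp]: "a \<in> C \<Longrightarrow> YY a n 0 = 0"
  using Y_add2[of a 0 0 n] C0 by simp
lemma Y_scale2: "a \<in> C \<Longrightarrow> b \<in> C \<Longrightarrow> YY a n (sc \<alpha> b) = sc \<alpha> (YY a n b)"
  using Ylin2[of a b 0 n \<alpha>] C0 by simp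
lemma Y_neg2: "a \<in> C \<Longrightarrow> b \<in> C \<Longrightarrow> YY a n (- b) = - YY a n b"
  using Y_scale2[of a b n "-1"] by (simp add: scale_minus_left)
lemma Y_diff2: "a \<in> C \<Longrightarrow> b1 \<in> C \<Longrightarrow> b2 \<in> C \<Longrightarrow> YY a n (b1 - b2) = YY a n b1 - YY a n b2"
  using Y_add2[of a b1 "-b2" n] Y_neg2[of a b2 n] Cneg by simp
lemma Y_add1: "a1 \<in> C \<Longrightarrow> a2 \<in> C \<Longrightarrow> b \<in> C \<Longrightarrow> YY (a1 + a2) n b = YY a1 n b + YY a2 n b"
  using Ylin1[of a1 a2 b 1 n] by simp
lemma Y_zero1[simp]: "b \<in> C \<Longrightarrow> YY 0 n b = 0"
  using Y_add1[of 0 0 b n] C0 by simp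
lemma Y_scale1: "a \<in> C \<Longrightarrow> b \<in> C \<Longrightarrow> YY (sc \<alpha> a) n b = sc \<alpha> (YY a n b)"
  using Ylin1[of a 0 b \<alpha> n] C0 by simp
lemma Y_neg1: "a \<in> C \<Longrightarrow> b \<in> C \<Longrightarrow> YY (- a) n b = - YY a n b"
  using Y_scale1[of a b "-1" n] by (simp add: scale_minus_left)
lemma Y_diff1: "a1 \<in> C \<Longrightarrow> a2 \<in> C \<Longrightarrow> b \<in> C \<Longrightarrow> YY (a1 - a2) n b = YY a1 n b - YY a2 n b"
  using Y_add1[of a1 "-a2" b n] Y_neg1[of a2 b n] Cneg by simp
lemma Y_sum2: "a \<in> C \<Longrightarrow> (\<And>x. x \<in> A \<Longrightarrow> f x \<in> C) \<Longrightarrow> YY a n (sum f A) = (\<Sum>x\<in>A. YY a n (f x))"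
proof (induction A rule: infinite_finite_induct)
  case (insert x F)
  have "sum f F \<in> C" using insert.prems by (intro Csum) auto
  then show ?case using insert Y_add2[of a "f x" "sum f F" n] by auto
qed auto
lemma Y_sum1: "b \<in> C \<Longrightarrow> (\<And>x. x \<in> A \<Longrightarrow> f x \<in> C) \<Longrightarrow> YY (sum f A) n b = (\<Sum>x\<in>A. YY (f x) n b)"
proof (induction A rule: infinite_finite_induct)
  case (insert x F)
  have "sum f F \<in> C" using insert.prems by (intro Csum) auto
  then show ?case using insert Y_add1[of "f x" "sum f F" b n] by auto
qed auto

lemma L_def': "L n v = YY om (n+1) v" unfolding Lop_def by simp
lemma Lcl: "v \<in> C \<Longrightarrow> L n v \<in> C" unfolding Lop_def using Ycl om_in by blast
lemma L_add: "x \<in> C \<Longrightarrow> y \<in> C \<Longrightarrow> L n (x + y) = L n x + L n y" unfolding Lop_def using Y_add2 om_in by blast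
lemma L_scale: "x \<in> C \<Longrightarrow> L n (sc a x) = sc a (L n x)" unfolding Lop_def using Y_scale2 om_in by blast
lemma L_zero[simp]: "L n 0 = 0" unfolding Lop_def using om_in by simp
lemma L_diff: "x \<in> C \<Longrightarrow> y \<in> C \<Longrightarrow> L n (x - y) = L n x - L n y" unfolding Lop_def using Y_diff2 om_in by blast
lemma L_sum: "(\<And>x. x \<in> A \<Longrightarrow> f x \<in> C) \<Longrightarrow> L n (sum f A) = (\<Sum>x\<in>A. L n (f x))"
  unfolding Lop_def using Y_sum2 om_in by blast
lemma Lpow_cl: "v \<in> C \<Longrightarrow> (L n ^^ j) v \<in> C" by (induction j) (auto simp: Lcl)

lemma wt_subspace: "subspace (W h)"
  unfolding subspace_def wt_def using C0 Cadd Cscale L_add L_scale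
  by (auto simp: scale_right_distrib scale_left_commute)

lemma L_wt: assumes "v \<in> W h" shows "L n v \<in> W (h - 2 * n)"
proof -
  have v: "v \<in> C" "L 0 v = sc (of_int h / 2) v" using assms wtD by auto
  have "L 0 (L n v) - L n (L 0 v) = sc (of_int (0 - n)) (L (0 + n) v)
             + (if 0 + n = 0 then sc (c / 12 * of_int (0 ^ 3 - 0)) v else 0)"
    using vir[OF v(1)] .
  then have "L 0 (L n v) = sc (of_int (- n)) (L n v) + sc (of_int h / 2) (L n v)"
    using v L_scale by (simp add: algebra_simps)
  also have "\<dots> = sc (of_int (h - 2*n) / 2) (L n v)"
    by (simp add: scale_left_distrib[symmetric] field_simps)
  finally show ?thesis using Lcl v by (intro wtI) auto
qed

lemma L_wt': "v \<in> W h \<Longrightarrow> h' = h - 2 * n \<Longrightarrow> L n v \<in> W h'" using L_wt by blast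

lemma Lpow_wt: "v \<in> W h \<Longrightarrow> (L n ^^ j) v \<in> W (h - 2 * n * int j)"
proof (induction j)
  case (Suc j)
  have "L n ((L n ^^ j) v) \<in> W (h - 2 * n * int j - 2 * n)" using L_wt[OF Suc.IH[OF Suc.prems]] .
  moreover have "h - 2 * n * int j - 2 * n = h - 2 * n * int (Suc j)" by (simp add: algebra_simps)
  ultimately show ?case by simp
qed auto

end


context vosa begin

lemma L_vac: "n \<ge> -1 \<Longrightarrow> L n one = 0"
  unfolding Lop_def using creation0 om_in by simp
lemma L_m2_vac: "L (-2) one = om"
  unfolding Lop_def using creation om_in by simp
lemma L1_om: "L 1 om = 0"
proof -
  have "L 1 (L (-2) one) - L (-2) (L 1 one) = sc (of_int (1 - -2)) (L (1 + -2) one)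
             + (if 1 + -2 = (0::int) then sc (c / 12 * of_int (1 ^ 3 - 1)) one else 0)"
    using vir[OF vac_in] .
  then show ?thesis using L_vac[of 1] L_vac[of "-1"] L_m2_vac by simp
qed
lemma vac_wt: "one \<in> W 0"
  using L_vac[of 0] vac_in by (intro wtI) auto

lemma gbin_1_Suc0[simp]: "gbin 1 (Suc 0) = 1" unfolding gbin_def by simp

lemma zero_wt: "0 \<in> W h" using wt_subspace subspace_0 by blast

definition hdec :: "'v \<Rightarrow> bool" where
  "hdec v \<longleftrightarrow> (\<exists>H w. finite H \<and> (\<forall>h. w h \<in> W h) \<and> (\<forall>h. h \<notin> H \<longrightarrow> w h = 0) \<and> v = (\<Sum>h\<in>H. w h))"

lemma hdec_subspace: "subspace {v. hdec v}"
proof (unfold subspace_def, intro conjI allI ballI impI)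
  show "0 \<in> {v. hdec v}" unfolding hdec_def
    by (rule CollectI, rule exI[of _ "{}"], rule exI[of _ "\<lambda>_. 0"]) (auto simp: zero_wt)
next
  fix x y assume "x \<in> {v. hdec v}" "y \<in> {v. hdec v}"
  then obtain H1 w1 H2 w2 where 1: "finite H1" "\<forall>h. w1 h \<in> W h" "\<forall>h. h \<notin> H1 \<longrightarrow> w1 h = 0" "x = (\<Sum>h\<in>H1. w1 h)"
    and 2: "finite H2" "\<forall>h. w2 h \<in> W h" "\<forall>h. h \<notin> H2 \<longrightarrow> w2 h = 0" "y = (\<Sum>h\<in>H2. w2 h)"
    unfolding hdec_def by blast
  have "(\<Sum>h\<in>H1 \<union> H2. w1 h) = (\<Sum>h\<in>H1. w1 h)" using 1 2 by (intro sum.mono_neutral_right) auto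
  then have "x = (\<Sum>h\<in>H1 \<union> H2. w1 h)" using 1 by simp
  moreover have "(\<Sum>h\<in>H1 \<union> H2. w2 h) = (\<Sum>h\<in>H2. w2 h)" using 1 2 by (intro sum.mono_neutral_right) auto
  then have "y = (\<Sum>h\<in>H1 \<union> H2. w2 h)" using 2 by simp
  ultimately have "x + y = (\<Sum>h\<in>H1 \<union> H2. w1 h + w2 h)" by (simp add: sum.distrib)
  moreover have "\<forall>h. w1 h + w2 h \<in> W h" using 1 2 wt_subspace subspace_add by blast
  ultimately show "x + y \<in> {v. hdec v}" unfolding hdec_def using 1 2
    by (intro CollectI exI[of _ "H1 \<union> H2"] exI[of _ "\<lambda>h. w1 h + w2 h"]) auto
next
  fix a x assume "x \<in> {v. hdec v}"
  then obtain H1 w1 where 1: "finite H1" "\<forall>h. w1 h \<in> W h" "\<forall>h. h \<notin> H1 \<longrightarrow> w1 h = 0" "x = (\<Sum>h\<in>H1. w1 h)"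
    unfolding hdec_def by blast
  have "sc a x = (\<Sum>h\<in>H1. sc a (w1 h))" using 1 by (simp add: scale_sum_right)
  moreover have "\<forall>h. sc a (w1 h) \<in> W h" using 1 wt_subspace subspace_scale by blast
  ultimately show "sc a x \<in> {v. hdec v}" unfolding hdec_def using 1
    by (intro CollectI exI[of _ "H1"] exI[of _ "\<lambda>h. sc a (w1 h)"]) auto
qed

lemma hdec_all: assumes "v \<in> C" shows "hdec v"
proof -
  have "\<Union>(range W) \<subseteq> {v. hdec v}"
  proof
    fix x assume "x \<in> \<Union>(range W)"
    then obtain h where x: "x \<in> W h" by blast
    show "x \<in> {v. hdec v}" unfolding hdec_def
      by (rule CollectI, rule exI[of _ "{h}"], rule exI[of _ "\<lambda>h'. if h' = h then x else 0"]) (auto simp: zero_wt x)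
  qed
  then have "span (\<Union>(range W)) \<subseteq> {v. hdec v}" using hdec_subspace span_minimal by blast
  then show ?thesis using assms span_wt by blast
qed

lemma hdec_obtain:
  assumes "v \<in> C"
  obtains H w where "finite H" "\<And>h. w h \<in> W h" "\<And>h. h \<notin> H \<Longrightarrow> w h = 0" "v = (\<Sum>h\<in>H. w h)"
  using hdec_all[OF assms] unfolding hdec_def by blast

lemma lin_ext:
  assumes hom: "\<And>h v. v \<in> W h \<Longrightarrow> P v"
    and lin: "\<And>x y. x \<in> C \<Longrightarrow> y \<in> C \<Longrightarrow> P x \<Longrightarrow> P y \<Longrightarrow> P (x + y)"
    and z: "P 0"
    and v: "v \<in> C"
  shows "P v"
proof -
  obtain H w where H: "finite H" "\<And>h. w h \<in> W h" "v = (\<Sum>h\<in>H. w h)"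
    using hdec_obtain[OF v] by blast
  have "P (\<Sum>h\<in>H. w h)" using H(1)
  proof (induction H rule: finite_induct)
    case empty then show ?case using z by simp
  next
    case (insert x F)
    have "sum w F \<in> C" using H(2) wt_sub by (intro Csum) auto
    then show ?case using insert lin[of "w x" "sum w F"] hom[OF H(2)] H(2) wt_sub by auto
  qed
  then show ?thesis using H by simp
qed

lemma mode_wt:
  assumes a: "a \<in> W h1" and b: "b \<in> W h2"
  shows "YY a n b \<in> W (h1 + h2 - 2 * n - 2)"
proof -
  have aC: "a \<in> C" and bC: "b \<in> C" using a b wt_sub by auto
  have J: "fsum (\<lambda>i. sc (gbin 1 i) (YY (YY om (0 + int i) a) (1 + n - int i) b))
         = fsum (\<lambda>i. sc (sgn_int (int i) * gbin 0 i)
              (YY om (1 + 0 - int i) (YY a (n + int i) b)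
               - sc (sgn_int 0 * (if odd (4::int) \<and> odd h1 then -1 else 1))
                    (YY a (n + 0 - int i) (YY om (1 + int i) b))))"
    using jacobi[OF cv_wt a bC, where m=1 and n=n and k=0] .
  have "fsum (\<lambda>i. sc (gbin 1 i) (YY (YY om (0 + int i) a) (1 + n - int i) b))
      = (\<Sum>i\<in>{0,1}. sc (gbin 1 i) (YY (YY om (0 + int i) a) (1 + n - int i) b))"
    by (rule fsum_eq_sum) (auto simp: gbin_one_big)
  also have "\<dots> = YY (L (-1) a) (n + 1) b + YY (L 0 a) n b"
    unfolding Lop_def by (simp add: add.commute)
  also have "\<dots> = sc (- of_int (n+1)) (YY a n b) + sc (of_int h1 / 2) (YY a n b)"
    using deriv[OF aC bC, of "n+1"] wtD[OF a] Y_scale1[OF aC bC] by simp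
  finally have LHS: "fsum (\<lambda>i. sc (gbin 1 i) (YY (YY om (0 + int i) a) (1 + n - int i) b))
      = sc (- of_int (n+1)) (YY a n b) + sc (of_int h1 / 2) (YY a n b)" .
  have "fsum (\<lambda>i. sc (sgn_int (int i) * gbin 0 i)
              (YY om (1 + 0 - int i) (YY a (n + int i) b)
               - sc (sgn_int 0 * (if odd (4::int) \<and> odd h1 then -1 else 1))
                    (YY a (n + 0 - int i) (YY om (1 + int i) b))))
       = L 0 (YY a n b) - YY a n (L 0 b)"
    by (subst fsum_single) (auto simp: gbin_zero_pos Lop_def)
  also have "\<dots> = L 0 (YY a n b) - sc (of_int h2 / 2) (YY a n b)"
    using wtD[OF b] Y_scale2[OF aC bC] by simp
  finally have RHS: "fsum (\<lambda>i. sc (sgn_int (int i) * gbin 0 i)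
              (YY om (1 + 0 - int i) (YY a (n + int i) b)
               - sc (sgn_int 0 * (if odd (4::int) \<and> odd h1 then -1 else 1))
                    (YY a (n + 0 - int i) (YY om (1 + int i) b))))
       = L 0 (YY a n b) - sc (of_int h2 / 2) (YY a n b)" .
  have "L 0 (YY a n b) - sc (of_int h2 / 2) (YY a n b) = sc (- of_int (n+1)) (YY a n b) + sc (of_int h1 / 2) (YY a n b)"
    using J LHS RHS by simp
  then have "L 0 (YY a n b) = sc (- of_int (n+1)) (YY a n b) + sc (of_int h1 / 2) (YY a n b) + sc (of_int h2 / 2) (YY a n b)"
    by (simp add: diff_eq_eq)
  also have "\<dots> = sc (of_int (h1 + h2 - 2 * n - 2) / 2) (YY a n b)"
  proof -
    have "(of_int (h1 + h2 - 2*n - 2) / 2 :: complex) = - of_int (n+1) + of_int h1/2 + of_int h2/2"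
      by (simp add: field_simps)
    then show ?thesis by (simp only: scale_left_distrib)
  qed
  finally show ?thesis using Ycl[OF aC bC] by (intro wtI) auto
qed

lemma mode_wt': "a \<in> W h1 \<Longrightarrow> b \<in> W h2 \<Longrightarrow> h = h1 + h2 - 2 * n - 2 \<Longrightarrow> YY a n b \<in> W h"
  using mode_wt by blast

context
  fixes x assumes x0: "x \<in> W 0" and xd: "L (-1) x = 0"
begin

lemma xC: "x \<in> C" using x0 wt_sub by blast

lemma x_modes: "u \<in> C \<Longrightarrow> m \<noteq> -1 \<Longrightarrow> YY x m u = 0"
proof -
  assume u: "u \<in> C" "m \<noteq> -1"
  have "YY (L (-1) x) (m+1) u = sc (- of_int (m+1)) (YY x m u)" using deriv[OF xC u(1), of "m+1"] by simp
  then have "sc (- of_int (m+1)) (YY x m u) = 0" using xd u by simp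
  moreover have "(- of_int (m+1) :: complex) \<noteq> 0" using u(2)
    by (metis add.inverse_neutral add_eq_0_iff2 minus_equation_iff of_int_eq_0_iff)
  ultimately show ?thesis by simp
qed

lemma x_comm_h:
  assumes b: "b \<in> W h2" and u: "u \<in> C"
  shows "YY x (-1) (YY b n u) = YY b n (YY x (-1) u)"
proof -
  have bC: "b \<in> C" using b wt_sub by blast
  have J: "fsum (\<lambda>i. sc (gbin (-1) i) (YY (YY x (0 + int i) b) (-1 + n - int i) u))
         = fsum (\<lambda>i. sc (sgn_int (int i) * gbin 0 i)
              (YY x (-1 + 0 - int i) (YY b (n + int i) u)
               - sc (sgn_int 0 * (if odd (0::int) \<and> odd h2 then -1 else 1))
                    (YY b (n + 0 - int i) (YY x (-1 + int i) u))))"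
    using jacobi[OF x0 b u, where m="-1" and n=n and k=0] .
  have "fsum (\<lambda>i. sc (gbin (-1) i) (YY (YY x (0 + int i) b) (-1 + n - int i) u)) = 0"
    unfolding fsum_def using x_modes[OF bC] u by simp
  moreover have "fsum (\<lambda>i. sc (sgn_int (int i) * gbin 0 i)
              (YY x (-1 + 0 - int i) (YY b (n + int i) u)
               - sc (sgn_int 0 * (if odd (0::int) \<and> odd h2 then -1 else 1))
                    (YY b (n + 0 - int i) (YY x (-1 + int i) u))))
     = YY x (-1) (YY b n u) - YY b n (YY x (-1) u)"
    by (subst fsum_single) (auto simp: gbin_zero_pos)
  ultimately show ?thesis using J by simp
qed

lemma x_assoc_h:
  assumes b: "b \<in> W h2" and u: "u \<in> C"
  shows "YY (YY x (-1) b) n u = YY x (-1) (YY b n u)"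
proof -
  have bC: "b \<in> C" using b wt_sub by blast
  have J: "fsum (\<lambda>i. sc (gbin 0 i) (YY (YY x (-1 + int i) b) (0 + n - int i) u))
         = fsum (\<lambda>i. sc (sgn_int (int i) * gbin (-1) i)
              (YY x (0 + -1 - int i) (YY b (n + int i) u)
               - sc (sgn_int (-1) * (if odd (0::int) \<and> odd h2 then -1 else 1))
                    (YY b (n + -1 - int i) (YY x (0 + int i) u))))"
    using jacobi[OF x0 b u, where m=0 and n=n and k="-1"] .
  have "fsum (\<lambda>i. sc (gbin 0 i) (YY (YY x (-1 + int i) b) (0 + n - int i) u)) = YY (YY x (-1) b) n u"
    by (subst fsum_single) (auto simp: gbin_zero_pos)
  moreover have "fsum (\<lambda>i. sc (sgn_int (int i) * gbin (-1) i)
              (YY x (0 + -1 - int i) (YY b (n + int i) u)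
               - sc (sgn_int (-1) * (if odd (0::int) \<and> odd h2 then -1 else 1))
                    (YY b (n + -1 - int i) (YY x (0 + int i) u))))
      = YY x (-1) (YY b n u)"
  proof (subst fsum_single)
    fix i :: nat assume "i \<noteq> 0"
    then show "sc (sgn_int (int i) * gbin (-1) i)
              (YY x (0 + -1 - int i) (YY b (n + int i) u)
               - sc (sgn_int (-1) * (if odd (0::int) \<and> odd h2 then -1 else 1))
                    (YY b (n + -1 - int i) (YY x (0 + int i) u))) = 0"
      using x_modes[of "YY b (n + int i) u" "0 + -1 - int i"] x_modes[OF u, of "0 + int i"] Ycl[OF bC u] bC by simp
  next
    show "sc (sgn_int (int 0) * gbin (-1) 0)
              (YY x (0 + -1 - int 0) (YY b (n + int 0) u)
               - sc (sgn_int (-1) * (if odd (0::int) \<and> odd h2 then -1 else 1))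
                    (YY b (n + -1 - int 0) (YY x (0 + int 0) u))) = YY x (-1) (YY b n u)"
      using x_modes[OF u, of 0] bC by simp
  qed
  ultimately show ?thesis using J by simp
qed

lemma x_comm:
  assumes b: "b \<in> C" and u: "u \<in> C"
  shows "YY x (-1) (YY b n u) = YY b n (YY x (-1) u)"
proof (rule lin_ext[where P="\<lambda>b. YY x (-1) (YY b n u) = YY b n (YY x (-1) u)", OF _ _ _ b])
  fix h v assume "v \<in> W h" then show "YY x (-1) (YY v n u) = YY v n (YY x (-1) u)" using x_comm_h u by blast
next
  fix p q assume "p \<in> C" "q \<in> C" "YY x (-1) (YY p n u) = YY p n (YY x (-1) u)" "YY x (-1) (YY q n u) = YY q n (YY x (-1) u)"
  then show "YY x (-1) (YY (p + q) n u) = YY (p + q) n (YY x (-1) u)" using Y_add1 Y_add2 Ycl u xC by simp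
next
  show "YY x (-1) (YY 0 n u) = YY 0 n (YY x (-1) u)" using u Ycl xC by simp
qed

lemma x_assoc:
  assumes b: "b \<in> C" and u: "u \<in> C"
  shows "YY (YY x (-1) b) n u = YY x (-1) (YY b n u)"
proof (rule lin_ext[where P="\<lambda>b. YY (YY x (-1) b) n u = YY x (-1) (YY b n u)", OF _ _ _ b])
  fix h v assume "v \<in> W h" then show "YY (YY x (-1) v) n u = YY x (-1) (YY v n u)" using x_assoc_h u by blast
next
  fix p q assume "p \<in> C" "q \<in> C" "YY (YY x (-1) p) n u = YY x (-1) (YY p n u)" "YY (YY x (-1) q) n u = YY x (-1) (YY q n u)"
  then show "YY (YY x (-1) (p + q)) n u = YY x (-1) (YY (p + q) n u)" using Y_add1 Y_add2 Ycl u xC by simp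
next
  show "YY (YY x (-1) 0) n u = YY x (-1) (YY 0 n u)" using u Ycl xC by simp
qed

end

end


locale uvosa = vosa sc V c for sc :: "complex \<Rightarrow> 'v::ab_group_add \<Rightarrow> 'v" and V c +
  fixes \<phi> :: "'v \<Rightarrow> 'v" and B :: "'v \<Rightarrow> 'v \<Rightarrow> complex"
  assumes inv: "antilinear_involution sc V \<phi>"
    and herm: "pos_hermitian_form sc (carrier V) B"
    and invf: "invariant_form sc V \<phi> B"
begin

lemma phi_cl: "a \<in> C \<Longrightarrow> \<phi> a \<in> C" using inv unfolding antilinear_involution_def by blast
lemma phi_lin: "a \<in> C \<Longrightarrow> b \<in> C \<Longrightarrow> \<phi> (sc \<alpha> a + b) = sc (cnj \<alpha>) (\<phi> a) + \<phi> b"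
  using inv unfolding antilinear_involution_def by blast
lemma phi_phi: "a \<in> C \<Longrightarrow> \<phi> (\<phi> a) = a" using inv unfolding antilinear_involution_def by blast
lemma phi_vac: "\<phi> one = one" using inv unfolding antilinear_involution_def by blast
lemma phi_cv: "\<phi> om = om" using inv unfolding antilinear_involution_def by blast
lemma phi_Y: "a \<in> C \<Longrightarrow> b \<in> C \<Longrightarrow> \<phi> (YY a n b) = YY (\<phi> a) n (\<phi> b)"
  using inv unfolding antilinear_involution_def by blast

lemma phi_add: "a \<in> C \<Longrightarrow> b \<in> C \<Longrightarrow> \<phi> (a + b) = \<phi> a + \<phi> b" using phi_lin[of a b 1] by simp
lemma phi_zero[simp]: "\<phi> 0 = 0" using phi_add[of 0 0] C0 by simp
lemma phi_scale: "a \<in> C \<Longrightarrow> \<phi> (sc \<alpha> a) = sc (cnj \<alpha>) (\<phi> a)" using phi_lin[of a 0 \<alpha>] C0 by simp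
lemma phi_neg: "a \<in> C \<Longrightarrow> \<phi> (- a) = - \<phi> a" using phi_scale[of a "-1"] by (simp add: scale_minus_left)
lemma phi_diff: "a \<in> C \<Longrightarrow> b \<in> C \<Longrightarrow> \<phi> (a - b) = \<phi> a - \<phi> b"
  using phi_add[of a "-b"] phi_neg[of b] Cneg by simp
lemma phi_L: "v \<in> C \<Longrightarrow> \<phi> (L n v) = L n (\<phi> v)" unfolding Lop_def using phi_Y om_in phi_cv by simp

lemma phi_wt: assumes "v \<in> W h" shows "\<phi> v \<in> W h"
proof -
  have v: "v \<in> C" "L 0 v = sc (of_int h / 2) v" using wtD[OF assms] by auto
  have "L 0 (\<phi> v) = \<phi> (L 0 v)" using phi_L[OF v(1)] by simp
  also have "\<dots> = \<phi> (sc (of_int h / 2) v)" using v by simp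
  also have "\<dots> = sc (of_int h / 2) (\<phi> v)" using phi_scale[OF v(1)] by simp
  finally show ?thesis using phi_cl v by (intro wtI) auto
qed

lemma B_lin: "u1 \<in> C \<Longrightarrow> u2 \<in> C \<Longrightarrow> v \<in> C \<Longrightarrow> B (sc \<alpha> u1 + u2) v = \<alpha> * B u1 v + B u2 v"
  using herm unfolding pos_hermitian_form_def by blast
lemma B_herm: "u \<in> C \<Longrightarrow> v \<in> C \<Longrightarrow> B u v = cnj (B v u)"
  using herm unfolding pos_hermitian_form_def by blast
lemma B_pos: "v \<in> C \<Longrightarrow> v \<noteq> 0 \<Longrightarrow> 0 < Re (B v v)"
  using herm unfolding pos_hermitian_form_def by blast

lemma B_add1: "u1 \<in> C \<Longrightarrow> u2 \<in> C \<Longrightarrow> v \<in> C \<Longrightarrow> B (u1 + u2) v = B u1 v + B u2 v"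
  using B_lin[of u1 u2 v 1] by simp
lemma B_zero1[simp]: "v \<in> C \<Longrightarrow> B 0 v = 0" using B_add1[of 0 0 v] C0 by simp
lemma B_scale1: "u \<in> C \<Longrightarrow> v \<in> C \<Longrightarrow> B (sc \<alpha> u) v = \<alpha> * B u v" using B_lin[of u 0 v \<alpha>] C0 by simp
lemma B_zero2[simp]: "u \<in> C \<Longrightarrow> B u 0 = 0" using B_herm[of u 0] C0 by simp
lemma B_scale2: "u \<in> C \<Longrightarrow> v \<in> C \<Longrightarrow> B u (sc \<alpha> v) = cnj \<alpha> * B u v"
  using B_herm[of u "sc \<alpha> v"] B_scale1[of v u \<alpha>] B_herm[of v u] Cscale by simp
lemma B_add2: "u \<in> C \<Longrightarrow> v1 \<in> C \<Longrightarrow> v2 \<in> C \<Longrightarrow> B u (v1 + v2) = B u v1 + B u v2"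
  using B_herm[of u "v1 + v2"] B_add1[of v1 v2 u] B_herm[of v1 u] B_herm[of v2 u] Cadd by simp
lemma B_neg1: "u \<in> C \<Longrightarrow> v \<in> C \<Longrightarrow> B (- u) v = - B u v" using B_scale1[of u v "-1"] by (simp add: scale_minus_left)
lemma B_neg2: "u \<in> C \<Longrightarrow> v \<in> C \<Longrightarrow> B u (- v) = - B u v" using B_scale2[of u v "-1"] by (simp add: scale_minus_left)
lemma B_diff1: "u1 \<in> C \<Longrightarrow> u2 \<in> C \<Longrightarrow> v \<in> C \<Longrightarrow> B (u1 - u2) v = B u1 v - B u2 v"
  using B_add1[of u1 "-u2" v] B_neg1[of u2 v] Cneg by simp
lemma B_diff2: "u \<in> C \<Longrightarrow> v1 \<in> C \<Longrightarrow> v2 \<in> C \<Longrightarrow> B u (v1 - v2) = B u v1 - B u v2"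
  using B_add2[of u v1 "-v2"] B_neg2[of u v2] Cneg by simp
lemma B_nonneg: "v \<in> C \<Longrightarrow> 0 \<le> Re (B v v)"
  using B_pos[of v] by (cases "v = 0") auto
lemma B_real: "v \<in> C \<Longrightarrow> Im (B v v) = 0"
  using B_herm[of v v] by (metis cnj.sel(2) neg_equal_zero)
lemma B_eq0: "v \<in> C \<Longrightarrow> B v v = 0 \<Longrightarrow> v = 0"
  using B_pos[of v] by fastforce

lemma invf': "a \<in> W h \<Longrightarrow> u \<in> C \<Longrightarrow> v \<in> C \<Longrightarrow>
        B u (YY (\<phi> a) k v)
        = sgn_int (h * (h + 1) div 2) *
          fsum (\<lambda>j. (1 / of_nat (fact j)) * B (YY ((L 1 ^^ j) a) (h - k - 2 - int j) u) v)"
  using invf unfolding invariant_form_def by blast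

lemma funpow_zero: "(L n ^^ j) 0 = 0" by (induction j) auto

lemma funpow_om: "j \<noteq> 0 \<Longrightarrow> (L 1 ^^ j) om = 0"
  by (cases j) (auto simp: funpow_Suc_right L1_om funpow_zero simp del: funpow.simps)

lemma adj: assumes u: "u \<in> C" and v: "v \<in> C" shows "B u (L n v) = B (L (-n) u) v"
proof -
  have "B u (L n v) = B u (YY (\<phi> om) (n+1) v)" unfolding Lop_def phi_cv by simp
  also have "\<dots> = sgn_int (4 * (4 + 1) div 2) *
          fsum (\<lambda>j. (1 / of_nat (fact j)) * B (YY ((L 1 ^^ j) om) (4 - (n+1) - 2 - int j) u) v)"
    using invf'[OF cv_wt u v] .
  also have "\<dots> = B (YY om (1 - n) u) v"
    by (subst fsum_single) (auto simp: funpow_om u v sgn_int_def)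
  also have "\<dots> = B (L (-n) u) v" unfolding Lop_def by (simp add: add.commute)
  finally show ?thesis .
qed

lemma adj': "u \<in> C \<Longrightarrow> v \<in> C \<Longrightarrow> B (L n u) v = B u (L (-n) v)"
  using adj[of u v "-n"] by simp

lemma adj_pow: "u \<in> C \<Longrightarrow> v \<in> C \<Longrightarrow> B ((L (-1) ^^ j) u) v = B u ((L 1 ^^ j) v)"
proof (induction j arbitrary: v)
  case (Suc j)
  have "B ((L (-1) ^^ Suc j) u) v = B (L (-1) ((L (-1) ^^ j) u)) v" by simp
  also have "\<dots> = B ((L (-1) ^^ j) u) (L 1 v)" using adj'[OF Lpow_cl[OF Suc.prems(1)] Suc.prems(2), of "-1"] by simp
  also have "\<dots> = B u ((L 1 ^^ j) (L 1 v))" using Suc.IH[of "L 1 v"] Suc.prems Lcl by simp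
  also have "\<dots> = B u ((L 1 ^^ Suc j) v)" by (simp add: funpow_Suc_right del: funpow.simps)
  finally show ?case .
qed simp

lemma L1Lm1: assumes v: "v \<in> W h" and z: "L 1 v = 0" shows "L 1 (L (-1) v) = sc (of_int h) v"
proof -
  have vC: "v \<in> C" using v wt_sub by blast
  have "L 1 (L (-1) v) - L (-1) (L 1 v) = sc (of_int (1 - -1)) (L (1 + -1) v)
             + (if 1 + -1 = (0::int) then sc (c / 12 * of_int (1 ^ 3 - 1)) v else 0)"
    using vir[OF vC] .
  then have "L 1 (L (-1) v) = sc 2 (L 0 v)" using z by simp
  also have "\<dots> = sc (of_int h) v" using wtD[OF v] by simp
  finally show ?thesis .
qed

lemma norm_Lm1: assumes v: "v \<in> W h" and z: "L 1 v = 0"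
  shows "B (L (-1) v) (L (-1) v) = of_int h * B v v"
proof -
  have vC: "v \<in> C" using v wt_sub by blast
  have "B (L (-1) v) (L (-1) v) = B (L 1 (L (-1) v)) v" using adj[OF Lcl[OF vC] vC, of "-1"] by simp
  also have "\<dots> = of_int h * B v v" using L1Lm1[OF v z] B_scale1[OF vC vC] by simp
  finally show ?thesis .
qed

lemma wt_nonneg: "h < 0 \<Longrightarrow> W h = {0}"
proof (rule ccontr)
  assume h: "h < 0" "W h \<noteq> {0}"
  obtain N where N: "\<forall>h<N. W h = {0}" using lowb by blast
  define S where "S = {h. h < 0 \<and> W h \<noteq> {0}}"
  have Sfin: "finite S" unfolding S_def
    by (rule finite_subset[of _ "{N..<0}"]) (use N in \<open>auto simp: not_le[symmetric]\<close>)
  have "h \<in> S" using h S_def by auto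
  define m where "m = Min S"
  have mS: "m \<in> S" using Min_in[OF Sfin] \<open>h \<in> S\<close> m_def by blast
  have mmin: "\<And>h'. h' \<in> S \<Longrightarrow> m \<le> h'" using Min_le[OF Sfin] m_def by blast
  have "0 \<in> W m" using zero_wt by blast
  then obtain v where v: "v \<in> W m" "v \<noteq> 0" using mS S_def by blast
  have vC: "v \<in> C" using v wt_sub by blast
  have "L 1 v \<in> W (m - 2 * 1)" using L_wt[OF v(1)] .
  moreover have "m - 2 \<notin> S" using mmin[of "m-2"] by auto
  moreover have "m - 2 < 0" using mS S_def by auto
  ultimately have z: "L 1 v = 0" using S_def by auto
  have "Re (B (L (-1) v) (L (-1) v)) = of_int m * Re (B v v)" using norm_Lm1[OF v(1) z] by simp
  moreover have "0 \<le> Re (B (L (-1) v) (L (-1) v))" using B_nonneg Lcl vC by blast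
  moreover have "0 < Re (B v v)" using B_pos vC v by blast
  moreover have "m < 0" using mS S_def by auto
  ultimately show False by (smt (verit) mult_neg_pos of_int_less_0_iff)
qed

lemma wt0_Lm1: assumes x: "x \<in> W 0" shows "L (-1) x = 0"
proof -
  have "L 1 x \<in> W (0 - 2 * 1)" using L_wt[OF x] .
  then have z: "L 1 x = 0" using wt_nonneg[of "-2"] by simp
  have xC: "x \<in> C" using x wt_sub by blast
  have "B (L (-1) x) (L (-1) x) = 0" using norm_Lm1[OF x z] by simp
  then show ?thesis using B_eq0 Lcl xC by blast
qed

lemma wt0_L1pow: assumes x: "x \<in> W 0" and j: "j \<noteq> 0" shows "(L 1 ^^ j) x = 0"
proof -
  have "L 1 x \<in> W (0 - 2 * 1)" using L_wt[OF x] .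
  then have z: "L 1 x = 0" using wt_nonneg[of "-2"] by simp
  then show ?thesis using j by (cases j) (auto simp: funpow_Suc_right funpow_zero simp del: funpow.simps)
qed

lemma adj0: assumes x: "x \<in> W 0" and u: "u \<in> C" and w: "w \<in> C"
  shows "B u (YY (\<phi> x) (-1) w) = B (YY x (-1) u) w"
proof -
  have "B u (YY (\<phi> x) (-1) w) = sgn_int (0 * (0 + 1) div 2) *
          fsum (\<lambda>j. (1 / of_nat (fact j)) * B (YY ((L 1 ^^ j) x) (0 - (-1) - 2 - int j) u) w)"
    using invf'[OF x u w] .
  also have "\<dots> = B (YY x (-1) u) w"
    by (subst fsum_single) (auto simp: wt0_L1pow[OF x] u w)
  finally show ?thesis .
qed



end


lemma Re_ofreal_mult: "Re (complex_of_real r * z) = r * Re z" by simp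

context uvosa begin

lemma vac_pow: "y \<in> C \<Longrightarrow> YY y (-1 - int j) one = sc (1 / of_nat (fact j)) ((L (-1) ^^ j) y)"
proof (induction j arbitrary: y)
  case 0 then show ?case using creation by simp
next
  case (Suc j)
  have E: "YY (L (-1) y) (-1 - int j) one = sc (- of_int (-1 - int j)) (YY y (-1 - int j - 1) one)"
    using deriv[OF Suc.prems vac_in] .
  have I: "YY (L (-1) y) (-1 - int j) one = sc (1 / of_nat (fact j)) ((L (-1) ^^ Suc j) y)"
    using Suc.IH[OF Lcl[OF Suc.prems]] by (simp add: funpow_Suc_right del: funpow.simps)
  have "sc (of_nat (Suc j)) (YY y (-1 - int (Suc j)) one) = sc (1 / of_nat (fact j)) ((L (-1) ^^ Suc j) y)"
    using E I by (simp add: algebra_simps)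
  then have "sc (1 / of_nat (Suc j)) (sc (of_nat (Suc j)) (YY y (-1 - int (Suc j)) one))
      = sc (1 / of_nat (Suc j)) (sc (1 / of_nat (fact j)) ((L (-1) ^^ Suc j) y))" by simp
  then show ?case by (simp del: of_nat_Suc add: of_nat_mult) (simp add: algebra_simps)
qed

lemma cft_when: assumes H: "W 0 \<subseteq> {sc \<alpha> one | \<alpha>. True}" shows "strong_CFT_type sc V"
  unfolding strong_CFT_type_def
proof (intro conjI allI impI ballI)
  show "W 0 = {sc \<alpha> one | \<alpha>. True}"
  proof
    show "W 0 \<subseteq> {sc \<alpha> one | \<alpha>. True}" using H .
    show "{sc \<alpha> one | \<alpha>. True} \<subseteq> W 0"
    proof
      fix v assume "v \<in> {sc \<alpha> one | \<alpha>. True}"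
      then obtain \<alpha> where "v = sc \<alpha> one" by blast
      then show "v \<in> W 0" using subspace_scale[OF wt_subspace vac_wt] by simp
    qed
  qed
next
  fix h :: int assume "h < 0" then show "W h = {0}" using wt_nonneg by blast
next
  fix v assume v: "v \<in> W 2"
  have vC: "v \<in> C" using v wt_sub by blast
  have "L 1 v \<in> W (2 - 2 * 1)" using L_wt[OF v] .
  then obtain \<alpha> where a: "L 1 v = sc \<alpha> one" using H by auto
  have "B (L 1 v) one = B v (L (-1) one)" using adj'[OF vC vac_in] by simp
  also have "\<dots> = 0" using L_vac[of "-1"] vC by simp
  finally have "\<alpha> * B one one = 0" using a B_scale1[OF vac_in vac_in] by simp
  then have "\<alpha> = 0 \<or> one = 0" using B_eq0[OF vac_in] by auto
  then show "L 1 v = 0" using a by auto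
qed

context
  fixes I assumes I: "vosa_ideal sc V I"
begin
lemma I_sub: "I \<subseteq> C" using I unfolding vosa_ideal_def by blast
lemma I_subspace: "subspace I" using I unfolding vosa_ideal_def by blast
lemma I_Y1: "a \<in> C \<Longrightarrow> v \<in> I \<Longrightarrow> YY a n v \<in> I" using I unfolding vosa_ideal_def by blast
lemma I_Y2: "a \<in> C \<Longrightarrow> v \<in> I \<Longrightarrow> YY v n a \<in> I" using I unfolding vosa_ideal_def by blast

lemma graded_ideal:
  assumes "finite H" shows "\<forall>w. (\<forall>h. w h \<in> W h) \<longrightarrow> sum w H \<in> I \<longrightarrow> (\<forall>h\<in>H. w h \<in> I)"
  using assms
proof (induction H rule: finite_induct)
  case empty then show ?case by simp
next
  case (insert h0 F)
  show ?case
  proof (intro allI impI)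
    fix w assume w: "\<forall>h. w h \<in> W h" and s: "sum w (insert h0 F) \<in> I"
    have wC: "\<And>h. w h \<in> C" using w wt_sub by blast
    define w' where "w' h = sc ((of_int h - of_int h0) / 2) (w h)" for h
    have w'W: "\<forall>h. w' h \<in> W h" unfolding w'_def using w wt_subspace subspace_scale by blast
    let ?v = "sum w (insert h0 F)"
    have vC: "?v \<in> C" using wC by (intro Csum)
    have "L 0 ?v \<in> I" unfolding Lop_def using I_Y1[OF om_in s] by simp
    then have d: "L 0 ?v - sc (of_int h0 / 2) ?v \<in> I" using s I_subspace subspace_diff subspace_scale by blast
    have "L 0 ?v = (\<Sum>h\<in>insert h0 F. L 0 (w h))"
      using L_sum[of "insert h0 F" w 0] wC by blast
    also have "\<dots> = (\<Sum>h\<in>insert h0 F. sc (of_int h / 2) (w h))"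
      by (rule sum.cong) (use wtD w in auto)
    finally have "L 0 ?v = (\<Sum>h\<in>insert h0 F. sc (of_int h / 2) (w h))" .
    moreover have "sc (of_int h0 / 2) ?v = (\<Sum>h\<in>insert h0 F. sc (of_int h0 / 2) (w h))"
      by (simp add: scale_sum_right)
    ultimately have "L 0 ?v - sc (of_int h0 / 2) ?v = (\<Sum>h\<in>insert h0 F. w' h)"
      unfolding w'_def by (simp add: sum_subtractf[symmetric] scale_left_diff_distrib[symmetric] diff_divide_distrib)
    also have "\<dots> = sum w' F" using insert.hyps unfolding w'_def by simp
    finally have "sum w' F \<in> I" using d by simp
    then have IH: "\<forall>h\<in>F. w' h \<in> I" using insert.IH w'W by blast
    have F: "\<forall>h\<in>F. w h \<in> I"
    proof
      fix h assume h: "h \<in> F"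
      then have hne: "(of_int h - of_int h0) / 2 \<noteq> (0::complex)" using insert.hyps by auto
      have e: "1 / ((of_int h - of_int h0) / 2) * ((of_int h - of_int h0) / 2) = (1::complex)" using hne by simp
      have "w h = sc (1 / ((of_int h - of_int h0) / 2)) (w' h)" unfolding w'_def scale_scale e by simp
      moreover have "sc (1 / ((of_int h - of_int h0) / 2)) (w' h) \<in> I"
        by (rule subspace_scale[OF I_subspace]) (use IH h in blast)
      ultimately show "w h \<in> I" by simp
    qed
    then have "sum w F \<in> I" by (intro subspace_sum[OF I_subspace]) blast
    then have "?v - sum w F \<in> I" using s by (intro subspace_diff[OF I_subspace])
    then have "w h0 \<in> I" using insert.hyps by simp
    then show "\<forall>h\<in>insert h0 F. w h \<in> I" using F by blast
  qed
qed

lemma ideal_hom: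
  assumes "v \<in> I" "v \<noteq> 0" shows "\<exists>h a. a \<in> W h \<and> a \<in> I \<and> a \<noteq> 0"
proof -
  have vC: "v \<in> C" using assms I_sub by blast
  obtain H w where H: "finite H" "\<And>h. w h \<in> W h" "\<And>h. h \<notin> H \<Longrightarrow> w h = 0" "v = (\<Sum>h\<in>H. w h)"
    using hdec_obtain[OF vC] by blast
  have "\<exists>h\<in>H. w h \<noteq> 0"
  proof (rule ccontr)
    assume "\<not> (\<exists>h\<in>H. w h \<noteq> 0)"
    then have "v = 0" using H(4) by simp
    then show False using assms(2) by simp
  qed
  then obtain h where h: "h \<in> H" "w h \<noteq> 0" by blast
  have "w h \<in> I" using graded_ideal[OF H(1)] H assms(1) h by blast
  then show ?thesis using H(2) h by blast
qed
end

lemma key_pos: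
  assumes a: "a \<in> W h" and a0: "a \<noteq> 0"
  shows "B one (YY (\<phi> a) (h - 1) a) \<noteq> 0"
proof -
  have aC: "a \<in> C" using a wt_sub by blast
  have h0: "h \<ge> 0" using wt_nonneg[of h] a a0 by (cases "h < 0") auto
  define y where "y j = (L 1 ^^ j) a" for j
  have yC: "y j \<in> C" for j unfolding y_def using Lpow_cl[OF aC] .
  define t where "t j = (1 / of_nat (fact j)) * B (YY ((L 1 ^^ j) a) (h - (h - 1) - 2 - int j) one) a" for j
  have t: "t j = complex_of_real ((1 / fact j) * (1 / fact j)) * B (y j) (y j)" for j
  proof -
    have "YY ((L 1 ^^ j) a) (h - (h - 1) - 2 - int j) one = sc (1 / of_nat (fact j)) ((L (-1) ^^ j) (y j))"
      using vac_pow[OF yC, of j] unfolding y_def by simp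
    then have "t j = (1 / of_nat (fact j)) * ((1 / of_nat (fact j)) * B ((L (-1) ^^ j) (y j)) a)"
      unfolding t_def using B_scale1[OF Lpow_cl[OF yC] aC] by simp
    also have "B ((L (-1) ^^ j) (y j)) a = B (y j) (y j)" using adj_pow[OF yC aC] unfolding y_def by simp
    finally show ?thesis by simp
  qed
  have tz: "t j = 0" if "j \<notin> {0..nat h}" for j
  proof -
    have "y j \<in> W (h - 2 * 1 * int j)" unfolding y_def using Lpow_wt[OF a] .
    moreover have "h - 2 * 1 * int j < 0" using that h0 by auto
    ultimately have "y j = 0" using wt_nonneg by blast
    then show ?thesis using t C0 by simp
  qed
  have "B one (YY (\<phi> a) (h - 1) a) = sgn_int (h * (h + 1) div 2) * fsum t"
    unfolding t_def using invf'[OF a vac_in aC] .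
  moreover have "fsum t = sum t {0..nat h}" by (rule fsum_eq_sum) (use tz in auto)
  moreover have "Re (sum t {0..nat h}) > 0"
  proof -
    have nn: "\<forall>j\<in>{0..nat h}. 0 \<le> Re (t j)"
    proof
      fix j
      have "Re (t j) = (1 / fact j * (1 / fact j)) * Re (B (y j) (y j))" unfolding t Re_ofreal_mult ..
      then show "0 \<le> Re (t j)" using B_nonneg[OF yC, of j] by simp
    qed
    have "Re (t 0) > 0" using t[of 0] B_pos[OF aC a0] unfolding y_def by simp
    moreover have "Re (t 0) \<le> (\<Sum>j\<in>{0..nat h}. Re (t j))"
      using member_le_sum[of 0 "{0..nat h}" "\<lambda>j. Re (t j)"] nn by auto
    ultimately show ?thesis by (simp add: Re_sum)
  qed
  then have "sum t {0..nat h} \<noteq> 0" by (metis Re_sum less_irrefl zero_complex.sel(1))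
  moreover have "sgn_int (h * (h + 1) div 2) \<noteq> 0" unfolding sgn_int_def by simp
  ultimately show ?thesis by simp
qed

lemma simple_when: assumes H: "W 0 \<subseteq> {sc \<alpha> one | \<alpha>. True}" shows "simple_VOSA sc V"
  unfolding simple_VOSA_def
proof (intro allI impI)
  fix I assume I: "vosa_ideal sc V I"
  show "I = {0} \<or> I = C"
  proof (cases "I = {0}")
    case False
    have "0 \<in> I" using I_subspace[OF I] subspace_0 by blast
    then obtain v where v: "v \<in> I" "v \<noteq> 0" using False by blast
    obtain h a where a: "a \<in> W h" "a \<in> I" "a \<noteq> 0" using ideal_hom[OF I v] by blast
    have aC: "a \<in> C" using a wt_sub by blast
    define z where "z = YY (\<phi> a) (h - 1) a"
    have zI: "z \<in> I" unfolding z_def using I_Y1[OF I phi_cl[OF aC] a(2)] .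
    have zW: "z \<in> W 0" unfolding z_def by (rule mode_wt'[OF phi_wt[OF a(1)] a(1)]) simp
    have Bz: "B one z \<noteq> 0" unfolding z_def using key_pos[OF a(1) a(3)] .
    obtain \<alpha> where al: "z = sc \<alpha> one" using H zW by blast
    have "\<alpha> \<noteq> 0" using Bz al vac_in by auto
    then have "one = sc (1 / \<alpha>) z" using al by simp
    moreover have "sc (1 / \<alpha>) z \<in> I" by (rule subspace_scale[OF I_subspace[OF I] zI])
    ultimately have oneI: "one \<in> I" by simp
    have "C \<subseteq> I"
    proof
      fix b assume b: "b \<in> C"
      then have "YY b (-1) one \<in> I" using I_Y1[OF I b oneI] by blast
      then show "b \<in> I" using creation[OF b] by simp
    qed
    then show ?thesis using I_sub[OF I] by blast
  qed simp
qed

end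


definition pe :: "(complex \<Rightarrow> 'v \<Rightarrow> 'v::ab_group_add) \<Rightarrow> ('v \<Rightarrow> 'v) \<Rightarrow> complex poly \<Rightarrow> 'v \<Rightarrow> 'v" where
  "pe s T q v = (\<Sum>j<Suc (degree q). s (coeff q j) ((T ^^ j) v))"

context vector_space begin
end

context vosa begin

context
  fixes U T
  assumes U: "subspace U"
    and TU: "\<And>u. u \<in> U \<Longrightarrow> T u \<in> U"
    and Tadd: "\<And>u v. u \<in> U \<Longrightarrow> v \<in> U \<Longrightarrow> T (u + v) = T u + T v"
    and Tsc: "\<And>u a. u \<in> U \<Longrightarrow> T (sc a u) = sc a (T u)"
begin

lemma Tpow_U: "v \<in> U \<Longrightarrow> (T ^^ j) v \<in> U" by (induction j) (auto simp: TU)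

lemma T_sum: "(\<And>x. x \<in> A \<Longrightarrow> f x \<in> U) \<Longrightarrow> T (sum f A) = (\<Sum>x\<in>A. T (f x))"
proof (induction A rule: infinite_finite_induct)
  case (infinite A)
  then show ?case using Tsc[of 0 0] U subspace_0 by simp
next
  case empty
  then show ?case using Tsc[of 0 0] U subspace_0 by simp
next
  case (insert x F)
  have "sum f F \<in> U" by (intro subspace_sum[OF U]) (use insert.prems in auto)
  then show ?case using insert Tadd[of "f x" "sum f F"] by auto
qed

lemma pe_bound: assumes "degree q < N" shows "pe sc T q v = (\<Sum>j<N. sc (coeff q j) ((T ^^ j) v))"
  unfolding pe_def
  by (rule sum.mono_neutral_left) (use assms in \<open>auto simp: coeff_eq_0\<close>)

lemma pe_U: "v \<in> U \<Longrightarrow> pe sc T q v \<in> U"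
  unfolding pe_def by (intro subspace_sum[OF U] subspace_scale[OF U] Tpow_U)

lemma pe_add: "pe sc T (p + q) v = pe sc T p v + pe sc T q v"
proof -
  define N where "N = Suc (max (degree p) (degree q))"
  have "degree (p + q) < N" unfolding N_def using degree_add_le[of p "max (degree p) (degree q)" q] by auto
  then have "pe sc T (p + q) v = (\<Sum>j<N. sc (coeff (p + q) j) ((T ^^ j) v))" by (rule pe_bound)
  also have "\<dots> = (\<Sum>j<N. sc (coeff p j) ((T ^^ j) v)) + (\<Sum>j<N. sc (coeff q j) ((T ^^ j) v))"
    by (simp add: scale_left_distrib sum.distrib)
  also have "\<dots> = pe sc T p v + pe sc T q v"
    using pe_bound[of p N v] pe_bound[of q N v] N_def by simp
  finally show ?thesis .
qed

lemma pe_const: "pe sc T [:a:] v = sc a v" unfolding pe_def by simp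

lemma pe_lin: assumes v: "v \<in> U"
  shows "pe sc T ([:-l, 1:] * q) v = T (pe sc T q v) - sc l (pe sc T q v)"
proof -
  define M where "M = Suc (degree q)"
  have e: "[:-l, 1:] * q = smult (-l) q + pCons 0 q"
    by (simp only: mult_pCons_left) (simp add: one_pCons[symmetric])
  have d1: "degree (smult (-l) q) \<le> Suc (degree q)" using degree_smult_le[of "-l" q] by linarith
  have d2: "degree (pCons 0 q) \<le> Suc (degree q)" by (simp add: degree_pCons_eq_if)
  have d3: "degree (smult (-l) q + pCons 0 q) \<le> Suc (degree q)" by (rule degree_add_le[OF d1 d2])
  have d: "degree ([:-l, 1:] * q) < Suc M"
    unfolding e M_def using d3 by linarith
  have "pe sc T ([:-l, 1:] * q) v = (\<Sum>j<Suc M. sc (coeff ([:-l, 1:] * q) j) ((T ^^ j) v))"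
    by (rule pe_bound[OF d])
  also have "\<dots> = (\<Sum>j<Suc M. sc (- l * coeff q j) ((T ^^ j) v)) + (\<Sum>j<Suc M. sc (coeff (pCons 0 q) j) ((T ^^ j) v))"
    unfolding e by (simp only: coeff_add coeff_smult scale_left_distrib sum.distrib)
  also have "(\<Sum>j<Suc M. sc (coeff (pCons 0 q) j) ((T ^^ j) v)) = (\<Sum>j<M. sc (coeff q j) (T ((T ^^ j) v)))"
    by (subst sum.lessThan_Suc_shift) simp
  also have "\<dots> = T (\<Sum>j<M. sc (coeff q j) ((T ^^ j) v))"
    by (subst T_sum) (auto simp: Tsc Tpow_U v U subspace_scale)
  also have "(\<Sum>j<M. sc (coeff q j) ((T ^^ j) v)) = pe sc T q v"
    using pe_bound[of q M v] M_def by simp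
  also have "(\<Sum>j<Suc M. sc (- l * coeff q j) ((T ^^ j) v)) = sc (- l) (pe sc T q v)"
  proof -
    have "pe sc T q v = (\<Sum>j<Suc M. sc (coeff q j) ((T^^j) v))" using M_def by (intro pe_bound) simp
    then show ?thesis by (simp only: scale_sum_right scale_scale)
  qed
  finally show ?thesis by (simp add: scale_minus_left)
qed

lemma krylov_split:
  fixes S v0
  assumes S: "finite S" "U \<subseteq> span S" and v0: "v0 \<in> U" "v0 \<noteq> 0"
    and SA: "\<And>l z w. z \<in> U \<Longrightarrow> w \<in> U \<Longrightarrow> w \<noteq> 0 \<Longrightarrow> T w = sc l w \<Longrightarrow>
               T (T z - sc l z) - sc l (T z - sc l z) = 0 \<Longrightarrow> T z - sc l z = 0"
  shows "\<exists>l k r. k \<in> U \<and> k \<noteq> 0 \<and> T k = sc l k \<and> r \<in> U \<and> v0 = k + (T r - sc l r)"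
proof -
  define p where "p j = (T ^^ j) v0" for j
  have pU: "p j \<in> U" for j unfolding p_def using Tpow_U[OF v0(1)] .
  define good where "good m \<longleftrightarrow> p m \<in> span (p ` {..<m})" for m
  have ex: "\<exists>m. good m"
  proof (rule ccontr)
    assume ng: "\<not> (\<exists>m. good m)"
    have ind: "independent (p ` {..<N}) \<and> card (p ` {..<N}) = N" for N
    proof (induction N)
      case 0 then show ?case by (simp add: independent_empty)
    next
      case (Suc N)
      have nsp: "p N \<notin> span (p ` {..<N})" using ng good_def by blast
      then have nin: "p N \<notin> p ` {..<N}" using span_superset[of "p ` {..<N}"] by blast
      have e: "p ` {..<Suc N} = insert (p N) (p ` {..<N})" by (simp add: lessThan_Suc)
      have "independent (insert (p N) (p ` {..<N}))" using Suc.IH nsp by (intro independent_insertI) auto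
      moreover have "card (insert (p N) (p ` {..<N})) = Suc N" using Suc.IH nin by simp
      ultimately show ?case unfolding e by simp
    qed
    have "p ` {..<Suc (card S)} \<subseteq> span S" using pU S(2) by blast
    then have "card (p ` {..<Suc (card S)}) \<le> card S" using independent_span_bound[OF S(1) conjunct1[OF ind]] by blast
    then show False using ind[of "Suc (card S)"] by simp
  qed
  define m where "m = (LEAST m. good m)"
  have gm: "good m" unfolding m_def using LeastI_ex[OF ex] .
  have lm: "\<And>j. j < m \<Longrightarrow> \<not> good j" unfolding m_def using not_less_Least by blast
  have m1: "m \<ge> 1"
  proof (rule ccontr)
    assume "\<not> m \<ge> 1" then have "m = 0" by simp
    then have "v0 \<in> span {}" using gm unfolding good_def p_def by simp
    then show False using v0 by simp
  qed
  have lowdeg: "pe sc T P v0 \<noteq> 0" if P: "P \<noteq> 0" "degree P < m" for P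
  proof
    assume z: "pe sc T P v0 = 0"
    define d where "d = degree P"
    define a where "a = coeff P d"
    have a0: "a \<noteq> 0" using P unfolding a_def d_def by simp
    have "pe sc T P v0 = (\<Sum>j<d. sc (coeff P j) (p j)) + sc a (p d)"
      unfolding pe_def p_def a_def d_def by simp
    then have "sc a (p d) = - (\<Sum>j<d. sc (coeff P j) (p j))" using z by (simp add: eq_neg_iff_add_eq_0 add.commute)
    then have "p d = sc (1 / a) (- (\<Sum>j<d. sc (coeff P j) (p j)))"
      using a0 by (metis scale_one nonzero_divide_eq_eq one_neq_zero scale_scale mult.commute
            divide_self_if times_divide_eq_left)
    moreover have "(\<Sum>j<d. sc (coeff P j) (p j)) \<in> span (p ` {..<d})"
      by (intro span_sum span_scale span_base) auto
    ultimately have "good d" unfolding good_def by (simp add: span_scale span_neg)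
    then show False using lm P(2) d_def by blast
  qed
  have injp: "inj_on p {..<m}"
  proof (rule inj_onI)
    fix i j assume ij: "i \<in> {..<m}" "j \<in> {..<m}" "p i = p j"
    show "i = j"
    proof (rule ccontr)
      assume "i \<noteq> j"
      then have "i < j \<or> j < i" by auto
      then show False
      proof
        assume ij': "i < j" have "p j \<in> p ` {..<j}" by (rule rev_image_eqI[of i]) (use ij ij' in auto)
        then have "good j" unfolding good_def by (rule span_base)
        then show False using lm ij(2) by auto
      next
        assume ij': "j < i" have "p i \<in> p ` {..<i}" by (rule rev_image_eqI[of j]) (use ij ij' in auto)
        then have "good i" unfolding good_def by (rule span_base)
        then show False using lm ij(1) by auto
      qed
    qed
  qed
  obtain u where u: "p m = (\<Sum>a\<in>p ` {..<m}. sc (u a) a)"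
    using gm unfolding good_def span_finite[OF finite_imageI[OF finite_lessThan]] by blast
  define cc where "cc j = u (p j)" for j
  have pm: "p m = (\<Sum>j<m. sc (cc j) (p j))"
    using u unfolding cc_def by (simp add: sum.reindex[OF injp])
  define Q where "Q = monom 1 m - (\<Sum>j<m. monom (cc j) j)"
  have cQ: "coeff Q j = (if j = m then 1 else 0) - (if j < m then cc j else 0)" for j
    unfolding Q_def by (auto simp: coeff_sum)
  have dQle: "degree Q \<le> m"
    unfolding Q_def by (intro degree_diff_le degree_monom_le degree_sum_le) (auto intro: order.trans[OF degree_monom_le])
  have dQ: "degree Q = m" using le_degree[of Q m] cQ[of m] dQle by simp
  have peQ: "pe sc T Q v0 = 0"
  proof -
    have "pe sc T Q v0 = (\<Sum>j<Suc m. sc (coeff Q j) (p j))" unfolding pe_def p_def dQ ..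
    also have "\<dots> = (\<Sum>j<m. sc (- cc j) (p j)) + p m" by (simp add: cQ)
    also have "\<dots> = 0" using pm by (simp add: scale_minus_left sum_negf)
    finally show ?thesis .
  qed
  have "\<not> constant (poly Q)" using constant_degree[of Q] dQ m1 by simp
  then obtain l where l: "poly Q l = 0" using fundamental_theorem_of_algebra by blast
  then obtain R where QR: "Q = [:-l, 1:] * R" using poly_eq_0_iff_dvd by (metis dvdE)
  have R0: "R \<noteq> 0" using QR dQ m1 by auto
  have dR: "degree R < m" using degree_mult_eq[of "[:-l, 1:]" R] R0 QR dQ by simp
  define w where "w = pe sc T R v0"
  have wU: "w \<in> U" unfolding w_def using pe_U[OF v0(1)] .
  have w0: "w \<noteq> 0" unfolding w_def using lowdeg[OF R0 dR] .
  have Tw: "T w - sc l w = 0" using peQ pe_lin[OF v0(1), of l R] QR unfolding w_def by simp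
  have Tw': "T w = sc l w" using Tw by simp
  have Rl: "poly R l \<noteq> 0"
  proof
    assume "poly R l = 0"
    then obtain S' where RS: "R = [:-l, 1:] * S'" using poly_eq_0_iff_dvd by (metis dvdE)
    have S0: "S' \<noteq> 0" using RS R0 by auto
    have dS: "degree S' < m" using degree_mult_eq[of "[:-l, 1:]" S'] S0 RS dR by simp
    define z where "z = pe sc T S' v0"
    have zU: "z \<in> U" unfolding z_def using pe_U[OF v0(1)] .
    have wz: "w = T z - sc l z" unfolding w_def z_def RS using pe_lin[OF v0(1)] by simp
    have "T z - sc l z = 0" using SA[OF zU wU w0 Tw'] Tw wz by simp
    then show False using w0 wz by simp
  qed
  have "poly (R - [:poly R l:]) l = 0" by simp
  then obtain G where RG: "R - [:poly R l:] = [:-l, 1:] * G" using poly_eq_0_iff_dvd by (metis dvdE)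
  have "R = [:poly R l:] + [:-l, 1:] * G" using RG by (simp add: algebra_simps)
  then have wexp: "w = sc (poly R l) v0 + (T (pe sc T G v0) - sc l (pe sc T G v0))"
    unfolding w_def using pe_add pe_const pe_lin[OF v0(1)] by metis
  define g where "g = pe sc T G v0"
  have gU: "g \<in> U" unfolding g_def using pe_U[OF v0(1)] .
  define a where "a = poly R l"
  have wa: "w = sc a v0 + (T g - sc l g)" using wexp unfolding g_def a_def .
  define k where "k = sc (1 / a) w"
  define r where "r = sc (- (1 / a)) g"
  have kU: "k \<in> U" unfolding k_def by (rule subspace_scale[OF U wU])
  have rU: "r \<in> U" unfolding r_def by (rule subspace_scale[OF U gU])
  have k0: "k \<noteq> 0" unfolding k_def using w0 Rl a_def by simp
  have Tk: "T k = sc l k" unfolding k_def using Tsc[OF wU] Tw' by (simp add: scale_left_commute)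
  have "T r - sc l r = sc (- (1 / a)) (T g - sc l g)"
    unfolding r_def using Tsc[OF gU, of "- (1 / a)"] by (simp add: scale_right_diff_distrib scale_left_commute)
  moreover have "v0 = sc (1 / a) w + sc (- (1 / a)) (T g - sc l g)"
  proof -
    have "sc (1 / a) w = sc (1 / a) (sc a v0) + sc (1 / a) (T g - sc l g)" using wa by (simp add: scale_right_distrib)
    also have "sc (1 / a) (sc a v0) = v0" using Rl a_def by simp
    finally show ?thesis by (simp add: scale_minus_left)
  qed
  ultimately have "v0 = k + (T r - sc l r)" unfolding k_def by simp
  then show ?thesis using kU k0 Tk rU by blast
qed

end
end


context uvosa begin

lemma wt0_mode: "x \<in> W 0 \<Longrightarrow> v \<in> W 0 \<Longrightarrow> YY x (-1) v \<in> W 0"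
  by (rule mode_wt') auto

lemma one_nz: assumes "\<not> W 0 \<subseteq> {sc \<alpha> one | \<alpha>. True}" shows "one \<noteq> 0"
proof
  assume o: "one = 0"
  have "W 0 \<subseteq> {sc \<alpha> one | \<alpha>. True}"
  proof
    fix v assume v: "v \<in> W 0"
    then have vC: "v \<in> C" using wt_sub by blast
    have "v = YY v (-1) one" using creation[OF vC] by simp
    also have "\<dots> = 0" using o vC by simp
    finally show "v \<in> {sc \<alpha> one | \<alpha>. True}" using o by auto
  qed
  then show False using assms by blast
qed

lemma selfadj_exists:
  assumes "\<not> W 0 \<subseteq> {sc \<alpha> one | \<alpha>. True}"
  shows "\<exists>x. x \<in> W 0 \<and> \<phi> x = x \<and> x \<notin> {sc \<alpha> one | \<alpha>. True}"
proof -
  obtain a where a: "a \<in> W 0" "a \<notin> {sc \<alpha> one | \<alpha>. True}" using assms by blast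
  have aC: "a \<in> C" using a wt_sub by blast
  have pa: "\<phi> a \<in> W 0" using phi_wt[OF a(1)] .
  have paC: "\<phi> a \<in> C" using pa wt_sub by blast
  define x where "x = sc (1/2) (a + \<phi> a)"
  define y where "y = sc (- \<i>/2) (a - \<phi> a)"
  have xW: "x \<in> W 0" unfolding x_def using a pa wt_subspace by (intro subspace_scale subspace_add) auto
  have yW: "y \<in> W 0" unfolding y_def using a pa wt_subspace by (intro subspace_scale subspace_diff) auto
  have px: "\<phi> x = x"
    unfolding x_def using phi_scale[of "a + \<phi> a" "1/2"] phi_add[OF aC paC] phi_phi[OF aC] aC paC Cadd
    by (simp add: add.commute)
  have py: "\<phi> y = y"
  proof -
    have "\<phi> y = sc (cnj (- \<i>/2)) (\<phi> (a - \<phi> a))" unfolding y_def using phi_scale Cdiff aC paC by blast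
    also have "\<phi> (a - \<phi> a) = \<phi> a - a" using phi_diff[OF aC paC] phi_phi[OF aC] by simp
    also have "sc (cnj (- \<i>/2)) (\<phi> a - a) = sc (- \<i>/2) (a - \<phi> a)"
    proof -
      have "sc (cnj (- \<i>/2)) (\<phi> a - a) = sc (\<i>/2) (\<phi> a - a)" by simp
      also have "\<dots> = sc (- (\<i>/2)) (a - \<phi> a)" by (simp add: scale_right_diff_distrib scale_minus_left)
      finally show ?thesis by simp
    qed
    finally show ?thesis unfolding y_def .
  qed
  have axy: "a = x + sc \<i> y"
  proof -
    have "sc \<i> y = sc (1/2) (a - \<phi> a)" unfolding y_def by (simp add: scale_scale)
    then have "x + sc \<i> y = sc (1/2) (a + \<phi> a) + sc (1/2) (a - \<phi> a)" unfolding x_def by (simp only:)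
    also have "\<dots> = sc (1/2) ((a + \<phi> a) + (a - \<phi> a))" by (simp only: scale_right_distrib)
    also have "(a + \<phi> a) + (a - \<phi> a) = a + a" by simp
    also have "a + a = sc 2 a" using scale_left_distrib[of 1 1 a] by simp
    also have "sc (1/2) (sc 2 a) = a" by simp
    finally show ?thesis by simp
  qed
  show ?thesis
  proof (cases "x \<in> {sc \<alpha> one | \<alpha>. True}")
    case False then show ?thesis using xW px by blast
  next
    case True
    then obtain \<alpha> where xa: "x = sc \<alpha> one" by blast
    show ?thesis
    proof (cases "y \<in> {sc \<alpha> one | \<alpha>. True}")
      case False then show ?thesis using yW py by blast
    next
      case True
      then obtain \<beta> where yb: "y = sc \<beta> one" by blast
      have "a = sc (\<alpha> + \<i> * \<beta>) one" using axy xa yb by (simp add: scale_left_distrib scale_scale)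
      then show ?thesis using a(2) by blast
    qed
  qed
qed

context
  fixes x assumes xW: "x \<in> W 0" and px: "\<phi> x = x"
begin

abbreviation "TT \<equiv> YY x (-1)"

lemma x_Lm1: "L (-1) x = 0" using wt0_Lm1[OF xW] .
lemma xxC: "x \<in> C" using xW wt_sub by blast
lemma TT_zero[simp]: "TT 0 = 0" using xxC by simp
lemma TT_C: "v \<in> C \<Longrightarrow> TT v \<in> C" using Ycl[OF xxC] .
lemma TT_add: "u \<in> C \<Longrightarrow> v \<in> C \<Longrightarrow> TT (u + v) = TT u + TT v" using Y_add2[OF xxC] .
lemma TT_sc: "u \<in> C \<Longrightarrow> TT (sc a u) = sc a (TT u)" using Y_scale2[OF xxC] .
lemma TT_comm: "b \<in> C \<Longrightarrow> u \<in> C \<Longrightarrow> TT (YY b n u) = YY b n (TT u)" using x_comm[OF xW x_Lm1] .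
lemma TT_assoc: "b \<in> C \<Longrightarrow> u \<in> C \<Longrightarrow> YY (TT b) n u = TT (YY b n u)" using x_assoc[OF xW x_Lm1] .
lemma TT_sa: "u \<in> C \<Longrightarrow> v \<in> C \<Longrightarrow> B u (TT v) = B (TT u) v" using adj0[OF xW, of u v] px by simp

lemma eig_real: assumes w: "w \<in> C" "w \<noteq> 0" and Tw: "TT w = sc l w" shows "cnj l = l"
proof -
  have "B (TT w) w = l * B w w" using Tw B_scale1[OF w(1) w(1)] by simp
  moreover have "B w (TT w) = cnj l * B w w" using Tw B_scale2[OF w(1) w(1)] by simp
  ultimately have "(l - cnj l) * B w w = 0" using TT_sa[OF w(1) w(1)] by (simp add: algebra_simps)
  moreover have "B w w \<noteq> 0" using B_eq0[OF w(1)] w(2) by blast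
  ultimately show ?thesis by simp
qed

lemma TT_diff: "u \<in> C \<Longrightarrow> TT u - sc l u \<in> C" using TT_C Cscale Cdiff by blast

lemma SA_prop: assumes lr: "cnj l = l" and z: "z \<in> C" and d0: "TT (TT z - sc l z) - sc l (TT z - sc l z) = 0"
  shows "TT z - sc l z = 0"
proof -
  define d where "d = TT z - sc l z"
  have dC: "d \<in> C" unfolding d_def using TT_diff[OF z] .
  have e: "TT z - sc l z = d" by (simp add: d_def)
  have "B (TT z - sc l z) d = B (TT z) d - l * B z d" using B_diff1[OF TT_C[OF z] Cscale[OF z, of l] dC] B_scale1[OF z dC] by simp
  then have "B d d = B (TT z) d - l * B z d" unfolding e .
  also have "B (TT z) d = B z (TT d)" using TT_sa[OF z dC] by simp
  also have "B z (TT d) = B z (sc l d)" using d0 e by (simp add: eq_iff_diff_eq_0[symmetric])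
  also have "B z (sc l d) = l * B z d" using B_scale2[OF z dC] lr by simp
  finally have "B d d = 0" by simp
  then show ?thesis using B_eq0[OF dC] d_def by simp
qed

definition "KK l = {v \<in> C. TT v = sc l v}"
definition "RR l = {TT u - sc l u | u. u \<in> C}"

lemma KK_I: "v \<in> C \<Longrightarrow> TT v = sc l v \<Longrightarrow> v \<in> KK l" unfolding KK_def by simp
lemma RR_I: "u \<in> C \<Longrightarrow> TT u - sc l u \<in> RR l" unfolding RR_def by blast
lemma KK_sub: "KK l \<subseteq> C" unfolding KK_def by blast
lemma RR_sub: "RR l \<subseteq> C" unfolding RR_def using TT_diff by blast

lemma KK_subspace: "subspace (KK l)"
  unfolding subspace_def KK_def
  using C0 Cadd Cscale TT_add TT_sc xxC by (auto simp: scale_right_distrib scale_left_commute)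

lemma RR_subspace: "subspace (RR l)"
  unfolding subspace_def
proof (intro conjI ballI allI)
  show "0 \<in> RR l" unfolding RR_def using C0 by (intro CollectI exI[of _ 0]) simp
next
  fix p q assume "p \<in> RR l" "q \<in> RR l"
  then obtain u v where uv: "u \<in> C" "v \<in> C" "p = TT u - sc l u" "q = TT v - sc l v" unfolding RR_def by blast
  have e: "TT (u + v) - sc l (u + v) = (TT u - sc l u) + (TT v - sc l v)"
    using uv(1,2) by (simp add: TT_add scale_right_distrib algebra_simps)
  have "p + q = TT (u + v) - sc l (u + v)" using uv(3,4) e by simp
  then show "p + q \<in> RR l" unfolding RR_def using uv Cadd by blast
next
  fix a p assume "p \<in> RR l"
  then obtain u where u: "u \<in> C" "p = TT u - sc l u" unfolding RR_def by blast
  have "sc a p = TT (sc a u) - sc l (sc a u)" using u TT_sc by (simp add: scale_right_diff_distrib scale_left_commute)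
  then show "sc a p \<in> RR l" unfolding RR_def using u Cscale by blast
qed

lemma KK_Y1: "a \<in> C \<Longrightarrow> v \<in> KK l \<Longrightarrow> YY a n v \<in> KK l"
  unfolding KK_def using TT_comm Ycl Y_scale2 by auto
lemma KK_Y2: "a \<in> C \<Longrightarrow> v \<in> KK l \<Longrightarrow> YY v n a \<in> KK l"
  unfolding KK_def using Ycl Y_scale1 by (auto simp: TT_assoc[symmetric])

lemma RR_Y1: assumes a: "a \<in> C" and v: "v \<in> RR l" shows "YY a n v \<in> RR l"
proof -
  obtain u where u: "u \<in> C" "v = TT u - sc l u" using v unfolding RR_def by blast
  have "YY a n v = TT (YY a n u) - sc l (YY a n u)"
    using u a TT_comm Y_diff2 Y_scale2 TT_C Cscale by simp
  then show ?thesis unfolding RR_def using Ycl[OF a u(1)] by blast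
qed
lemma RR_Y2: assumes a: "a \<in> C" and v: "v \<in> RR l" shows "YY v n a \<in> RR l"
proof -
  obtain u where u: "u \<in> C" "v = TT u - sc l u" using v unfolding RR_def by blast
  have "YY v n a = TT (YY u n a) - sc l (YY u n a)"
    using u a TT_assoc Y_diff1 Y_scale1 TT_C Cscale by simp
  then show ?thesis unfolding RR_def using Ycl[OF u(1) a] by blast
qed

lemma KR_int: assumes lr: "cnj l = l" and v1: "v \<in> KK l" and v2: "v \<in> RR l" shows "v = 0"
proof -
  obtain u where u: "u \<in> C" "v = TT u - sc l u" using v2 unfolding RR_def by blast
  have vC: "v \<in> C" and Tv: "TT v = sc l v" using v1 unfolding KK_def by auto
  have "B (TT u - sc l u) v = B (TT u) v - l * B u v" using B_diff1[OF TT_C[OF u(1)] Cscale[OF u(1), of l] vC] B_scale1[OF u(1) vC] by simp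
  then have "B v v = B (TT u) v - l * B u v" using u(2) by simp
  also have "B (TT u) v = B u (TT v)" using TT_sa[OF u(1) vC] by simp
  also have "\<dots> = l * B u v" using Tv B_scale2[OF u(1) vC] lr by simp
  finally have "B v v = 0" by simp
  then show ?thesis using B_eq0[OF vC] by simp
qed

lemma phi_KK: assumes lr: "cnj l = l" and v: "v \<in> KK l" shows "\<phi> v \<in> KK l"
proof -
  have vC: "v \<in> C" and Tv: "TT v = sc l v" using v unfolding KK_def by auto
  have "TT (\<phi> v) = \<phi> (TT v)" using phi_Y[OF xxC vC] px by simp
  also have "\<dots> = sc l (\<phi> v)" using Tv phi_scale[OF vC] lr by simp
  finally show ?thesis unfolding KK_def using phi_cl[OF vC] by simp
qed

lemma phi_RR: assumes lr: "cnj l = l" and v: "v \<in> RR l" shows "\<phi> v \<in> RR l"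
proof -
  obtain u where u: "u \<in> C" "v = TT u - sc l u" using v unfolding RR_def by blast
  have "\<phi> v = \<phi> (TT u) - \<phi> (sc l u)" using u phi_diff TT_C Cscale by simp
  also have "\<phi> (TT u) = TT (\<phi> u)" using phi_Y[OF xxC u(1)] px by simp
  also have "\<phi> (sc l u) = sc l (\<phi> u)" using phi_scale[OF u(1)] lr by simp
  finally show ?thesis unfolding RR_def using phi_cl[OF u(1)] by blast
qed

end

lemma split_exists:
  assumes H: "\<not> W 0 \<subseteq> {sc \<alpha> one | \<alpha>. True}"
  shows "\<exists>e f. e \<in> W 0 \<and> f \<in> W 0 \<and> e + f = one \<and> YY e (-1) e = e \<and> YY f (-1) f = f
     \<and> YY e (-1) f = 0 \<and> YY f (-1) e = 0 \<and> \<phi> e = e \<and> \<phi> f = f \<and> e \<noteq> 0 \<and> f \<noteq> 0"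
proof -
  obtain x where x: "x \<in> W 0" "\<phi> x = x" "x \<notin> {sc \<alpha> one | \<alpha>. True}" using selfadj_exists[OF H] by blast
  have xC: "x \<in> C" using x wt_sub by blast
  obtain S where S: "finite S" "S \<subseteq> W 0" "W 0 \<subseteq> span S" using fin_wt by blast
  have ex: "\<exists>l k r. k \<in> W 0 \<and> k \<noteq> 0 \<and> YY x (-1) k = sc l k \<and> r \<in> W 0 \<and> one = k + (YY x (-1) r - sc l r)"
  proof (rule krylov_split[of "W 0" "YY x (-1)" S one])
    show "subspace (W 0)" by (rule wt_subspace)
    show "\<And>u. u \<in> W 0 \<Longrightarrow> YY x (-1) u \<in> W 0" using wt0_mode[OF x(1)] .
    show "\<And>u v. u \<in> W 0 \<Longrightarrow> v \<in> W 0 \<Longrightarrow> YY x (-1) (u + v) = YY x (-1) u + YY x (-1) v"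
      using Y_add2[OF xC] wt_sub by blast
    show "\<And>u a. u \<in> W 0 \<Longrightarrow> YY x (-1) (sc a u) = sc a (YY x (-1) u)"
      using Y_scale2[OF xC] wt_sub by blast
    show "finite S" "W 0 \<subseteq> span S" using S by auto
    show "one \<in> W 0" by (rule vac_wt)
    show "one \<noteq> 0" using one_nz[OF H] .
  next
    fix l z w assume zw: "z \<in> W 0" "w \<in> W 0" "w \<noteq> 0" "YY x (-1) w = sc l w"
      "YY x (-1) (YY x (-1) z - sc l z) - sc l (YY x (-1) z - sc l z) = 0"
    have lr: "cnj l = l" using eig_real[OF x(1) x(2), of w l] zw wt_sub by blast
    show "YY x (-1) z - sc l z = 0" using SA_prop[OF x(1) x(2) lr, of z] zw wt_sub by blast
  qed
  then obtain l e r where er: "e \<in> W 0" "e \<noteq> 0" "YY x (-1) e = sc l e" "r \<in> W 0" "one = e + (YY x (-1) r - sc l r)"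
    by blast
  have eC: "e \<in> C" using er wt_sub by blast
  have rC: "r \<in> C" using er wt_sub by blast
  have lr: "cnj l = l" using eig_real[OF x(1) x(2) eC er(2) er(3)] .
  define f where "f = YY x (-1) r - sc l r"
  have fW: "f \<in> W 0" unfolding f_def using wt0_mode[OF x(1) er(4)] er(4) wt_subspace by (intro subspace_diff subspace_scale) auto
  have fC: "f \<in> C" using fW wt_sub by blast
  have ef: "e + f = one" using er(5) f_def by simp
  have eK: "e \<in> KK x l" using KK_I[OF x(1) x(2) eC er(3)] .
  have fR: "f \<in> RR x l" unfolding f_def using RR_I[OF x(1) x(2) rC] .
  have eL: "L (-1) e = 0" using wt0_Lm1[OF er(1)] .
  have fL: "L (-1) f = 0" using wt0_Lm1[OF fW] .
  have comm: "YY e (-1) f = YY f (-1) e"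
  proof -
    have "YY e (-1) f = YY e (-1) (YY f (-1) one)" using creation[OF fC] by simp
    also have "\<dots> = YY f (-1) (YY e (-1) one)" using x_comm[OF er(1) eL fC vac_in] .
    also have "\<dots> = YY f (-1) e" using creation[OF eC] by simp
    finally show ?thesis .
  qed
  have ef0: "YY e (-1) f = 0"
  proof (rule KR_int[OF x(1) x(2) lr])
    show "YY e (-1) f \<in> KK x l" unfolding comm by (rule KK_Y1[OF x(1) x(2) fC eK])
    show "YY e (-1) f \<in> RR x l" by (rule RR_Y1[OF x(1) x(2) eC fR])
  qed
  have fe0: "YY f (-1) e = 0" using ef0 comm by simp
  have ee: "YY e (-1) e = e"
  proof -
    have "e = YY e (-1) one" using creation[OF eC] by simp
    also have "\<dots> = YY e (-1) e + YY e (-1) f" using ef[symmetric] Y_add2[OF eC eC fC] by simp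
    finally show ?thesis using ef0 by simp
  qed
  have ff: "YY f (-1) f = f"
  proof -
    have "f = YY f (-1) one" using creation[OF fC] by simp
    also have "\<dots> = YY f (-1) e + YY f (-1) f" using ef[symmetric] Y_add2[OF fC eC fC] by simp
    finally show ?thesis using fe0 by simp
  qed
  have pe: "\<phi> e = e"
  proof -
    have "\<phi> e + \<phi> f = e + f" using phi_add[OF eC fC] ef phi_vac by simp
    then have d: "e - \<phi> e = \<phi> f - f" by (simp add: algebra_simps)
    have "e - \<phi> e \<in> KK x l"
      using KK_subspace[OF x(1) x(2)] eK phi_KK[OF x(1) x(2) lr eK] by (intro subspace_diff) auto
    moreover have "\<phi> f - f \<in> RR x l"
      using RR_subspace[OF x(1) x(2)] fR phi_RR[OF x(1) x(2) lr fR] by (intro subspace_diff) auto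
    ultimately have "e - \<phi> e \<in> KK x l" "e - \<phi> e \<in> RR x l" using d by auto
    then have "e - \<phi> e = 0" by (rule KR_int[OF x(1) x(2) lr])
    then show ?thesis by simp
  qed
  have pf: "\<phi> f = f" using phi_add[OF eC fC] ef phi_vac pe by simp
  have f0: "f \<noteq> 0"
  proof
    assume "f = 0"
    then have "one = e" using ef by simp
    then have "x = sc l one" using er(3) creation[OF xC] by simp
    then show False using x(3) by blast
  qed
  show ?thesis using er(1,2) fW ef ee ff ef0 fe0 pe pf f0 by blast
qed

end


definition subv :: "'v vosa \<Rightarrow> 'v \<Rightarrow> 'v vosa" where
  "subv V e = \<lparr> carrier = {v \<in> carrier V. Y V e (-1) v = v}, Y = Y V, vac = e, cv = Y V e (-1) (cv V) \<rparr>"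

lemma subv_simps[simp]:
  "carrier (subv V e) = {v \<in> carrier V. Y V e (-1) v = v}"
  "Y (subv V e) = Y V" "vac (subv V e) = e" "cv (subv V e) = Y V e (-1) (cv V)"
  unfolding subv_def by simp_all

context uvosa begin

context
  fixes e assumes eW: "e \<in> W 0" and ee: "YY e (-1) e = e" and pe: "\<phi> e = e"
begin

abbreviation "EE \<equiv> YY e (-1)"
abbreviation "D \<equiv> carrier (subv V e)"
abbreviation "SV \<equiv> subv V e"

lemma eC: "e \<in> C" using eW wt_sub by blast
lemma eL: "L (-1) e = 0" using wt0_Lm1[OF eW] .
lemma E_comm: "b \<in> C \<Longrightarrow> u \<in> C \<Longrightarrow> EE (YY b n u) = YY b n (EE u)" using x_comm[OF eW eL] .
lemma E_assoc: "b \<in> C \<Longrightarrow> u \<in> C \<Longrightarrow> YY (EE b) n u = EE (YY b n u)" using x_assoc[OF eW eL] .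
lemma EE_C: "u \<in> C \<Longrightarrow> EE u \<in> C" using Ycl[OF eC] .
lemma EE_idem: "u \<in> C \<Longrightarrow> EE (EE u) = EE u"
  using E_assoc[OF eC, of u "-1"] ee by simp
lemma D_sub: "D \<subseteq> C" by auto
lemma DI: "u \<in> C \<Longrightarrow> EE u = u \<Longrightarrow> u \<in> D" by simp
lemma DE: "u \<in> D \<Longrightarrow> u \<in> C \<and> EE u = u" by simp
lemma EE_D: "u \<in> C \<Longrightarrow> EE u \<in> D" using EE_C EE_idem by simp
lemma zero_D: "0 \<in> D" using C0 eC by simp
lemma L_EE: "v \<in> C \<Longrightarrow> L n (EE v) = EE (L n v)" unfolding Lop_def using E_comm om_in by simp
lemma L_D: assumes v: "v \<in> D" shows "L n v \<in> D"
proof -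
  have vC: "v \<in> C" and Ev: "EE v = v" using v by auto
  have "EE (L n v) = L n (EE v)" using L_EE[OF vC, of n] by simp
  then have "EE (L n v) = L n v" using Ev by simp
  then show ?thesis using Lcl[OF vC] by simp
qed
lemma LopS: "v \<in> D \<Longrightarrow> Lop SV n v = L n v"
proof -
  assume v: "v \<in> D"
  have "Lop SV n v = YY (EE om) (n+1) v" unfolding Lop_def by simp
  also have "\<dots> = EE (L n v)" unfolding Lop_def using E_assoc om_in v by simp
  also have "\<dots> = L n (EE v)" using L_EE[of v n] v by simp
  also have "\<dots> = L n v" using v by simp
  finally show ?thesis .
qed
lemma LopS_pow: assumes v: "v \<in> D" shows "(Lop SV n ^^ j) v = (L n ^^ j) v \<and> (L n ^^ j) v \<in> D"
proof (induction j)
  case 0 then show ?case using v by simp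
next
  case (Suc j)
  then have h: "(Lop SV n ^^ j) v = (L n ^^ j) v" "(L n ^^ j) v \<in> D" by blast+
  have "(Lop SV n ^^ Suc j) v = Lop SV n ((L n ^^ j) v)" using h(1) by simp
  also have "\<dots> = L n ((L n ^^ j) v)" by (rule LopS[OF h(2)])
  finally show ?case using L_D[OF h(2)] by simp
qed
lemma wtS: "wt sc SV h = W h \<inter> D"
  unfolding wt_def using LopS by auto
lemma EE_wt: "v \<in> W h \<Longrightarrow> EE v \<in> W h" by (rule mode_wt'[OF eW]) auto

lemma D_subspace: "subspace D"
  unfolding subspace_def
proof (intro conjI ballI allI)
  show "0 \<in> D" by (rule zero_D)
next
  fix x y assume "x \<in> D" "y \<in> D" then show "x + y \<in> D" using Y_add2[OF eC] Cadd by auto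
next
  fix a x assume "x \<in> D" then show "sc a x \<in> D" using Y_scale2[OF eC] Cscale by auto
qed

lemma sub_is_VOSA: "is_VOSA sc SV c"
  unfolding is_VOSA_def
proof (intro conjI)
  show "vector_space sc" by (rule VV1)
  show "subspace D" by (rule D_subspace)
  show "\<forall>a\<in>D. \<forall>n. \<forall>b\<in>D. Y SV a n b \<in> D" using E_comm Ycl by auto
  show "\<forall>a\<in>D. \<forall>n. \<forall>b1\<in>D. \<forall>b2\<in>D. \<forall>\<alpha>. Y SV a n (sc \<alpha> b1 + b2) = sc \<alpha> (Y SV a n b1) + Y SV a n b2"
    using Ylin2 by auto
  show "\<forall>a1\<in>D. \<forall>a2\<in>D. \<forall>n. \<forall>b\<in>D. \<forall>\<alpha>. Y SV (sc \<alpha> a1 + a2) n b = sc \<alpha> (Y SV a1 n b) + Y SV a2 n b"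
    using Ylin1 by auto
  show "\<forall>a\<in>D. \<forall>b\<in>D. \<exists>N. \<forall>n\<ge>N. Y SV a n b = 0" using trunc by auto
  show "vac SV \<in> D" using eC ee by simp
  show "\<forall>b\<in>D. \<forall>n. Y SV (vac SV) n b = (if n = -1 then b else 0)"
    using x_modes[OF eW eL] by auto
  show "\<forall>a\<in>D. Y SV a (-1) (vac SV) = a \<and> (\<forall>n\<ge>0. Y SV a n (vac SV) = 0)"
  proof (intro ballI conjI allI impI)
    fix a assume a: "a \<in> D"
    have aC: "a \<in> C" using a by simp
    have "YY a (-1) e = EE (YY a (-1) one)" using creation[OF eC] E_comm[OF aC vac_in] by simp
    then show "Y SV a (-1) (vac SV) = a" using creation[OF aC] a by simp
    fix n :: int assume n: "n \<ge> 0"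
    have "YY a n e = EE (YY a n one)" using creation[OF eC] E_comm[OF aC vac_in] by simp
    then show "Y SV a n (vac SV) = 0" using creation0[OF aC n] eC by simp
  qed
  show "cv SV \<in> wt sc SV 4"
  proof -
    have "EE om \<in> W 4" using EE_wt[OF cv_wt] .
    moreover have "EE om \<in> D" using EE_D[OF om_in] .
    ultimately show ?thesis unfolding wtS by simp
  qed
  show "\<forall>m n. \<forall>v\<in>D. Lop SV m (Lop SV n v) - Lop SV n (Lop SV m v)
           = sc (of_int (m - n)) (Lop SV (m + n) v)
             + (if m + n = 0 then sc (c / 12 * of_int (m ^ 3 - m)) v else 0)"
    using vir LopS L_D D_sub by auto
  show "\<forall>a\<in>D. \<forall>n. \<forall>b\<in>D. Y SV (Lop SV (-1) a) n b = sc (- of_int n) (Y SV a (n - 1) b)"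
    using deriv LopS by auto
  show "D \<subseteq> span (\<Union>h. wt sc SV h)"
  proof
    fix v assume v: "v \<in> D"
    then have vC: "v \<in> C" by simp
    obtain H w where H: "finite H" "\<And>h. w h \<in> W h" "v = (\<Sum>h\<in>H. w h)" using hdec_obtain[OF vC] by blast
    have wC: "\<And>h. w h \<in> C" using H(2) wt_sub by blast
    have "v = EE v" using v by simp
    also have "\<dots> = (\<Sum>h\<in>H. EE (w h))" using H(3) Y_sum2[OF eC, of H w] wC by simp
    also have "\<dots> \<in> span (\<Union>h. wt sc SV h)"
    proof (rule span_sum)
      fix h assume "h \<in> H"
      have "EE (w h) \<in> wt sc SV h" unfolding wtS using EE_wt[OF H(2)] EE_D[OF wC] by simp
      then show "EE (w h) \<in> span (\<Union>h. wt sc SV h)" by (intro span_base) blast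
    qed
    finally show "v \<in> span (\<Union>h. wt sc SV h)" .
  qed
  show "\<forall>h. \<exists>S. finite S \<and> S \<subseteq> wt sc SV h \<and> wt sc SV h \<subseteq> span S"
  proof
    fix h
    obtain S where S: "finite S" "S \<subseteq> W h" "W h \<subseteq> span S" using fin_wt by blast
    have SC: "S \<subseteq> C" using S(2) wt_sub by blast
    have "finite (EE ` S)" using S(1) by simp
    moreover have "EE ` S \<subseteq> wt sc SV h" unfolding wtS using EE_wt EE_D S(2) SC by auto
    moreover have "wt sc SV h \<subseteq> span (EE ` S)"
    proof
      fix v assume v: "v \<in> wt sc SV h"
      then have vW: "v \<in> W h" and vD: "v \<in> D" unfolding wtS by auto
      obtain u where u: "v = (\<Sum>s\<in>S. sc (u s) s)" using S(3) vW unfolding span_finite[OF S(1)] by blast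
      have "v = EE v" using vD by simp
      also have "\<dots> = (\<Sum>s\<in>S. EE (sc (u s) s))"
        unfolding u by (rule Y_sum2[OF eC]) (use SC in \<open>auto intro: Cscale\<close>)
      also have "\<dots> = (\<Sum>s\<in>S. sc (u s) (EE s))"
        by (rule sum.cong) (use SC Y_scale2[OF eC] in auto)
      also have "\<dots> \<in> span (EE ` S)" by (intro span_sum span_scale span_base) auto
      finally show "v \<in> span (EE ` S)" .
    qed
    ultimately show "\<exists>S. finite S \<and> S \<subseteq> wt sc SV h \<and> wt sc SV h \<subseteq> span S" by blast
  qed
  show "\<exists>N. \<forall>h<N. wt sc SV h = {0}"
  proof -
    obtain N where N: "\<forall>h<N. W h = {0}" using lowb by blast
    then have "\<forall>h<N. wt sc SV h = {0}" unfolding wtS using zero_D by auto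
    then show ?thesis by blast
  qed
  show "\<forall>h1 h2. \<forall>a\<in>wt sc SV h1. \<forall>b\<in>wt sc SV h2. \<forall>u\<in>D. \<forall>m n k::int.
         fsum (\<lambda>i. sc (gbin m i) (Y SV (Y SV a (k + int i) b) (m + n - int i) u))
         = fsum (\<lambda>i. sc (sgn_int (int i) * gbin k i)
              (Y SV a (m + k - int i) (Y SV b (n + int i) u)
               - sc (sgn_int k * (if odd h1 \<and> odd h2 then -1 else 1))
                    (Y SV b (n + k - int i) (Y SV a (m + int i) u))))"
    unfolding wtS using jacobi by auto
qed

lemma sub_unitary: "unitary_VOSA sc SV c \<phi>"
  unfolding unitary_VOSA_def
proof (intro conjI exI)
  show "is_VOSA sc SV c" by (rule sub_is_VOSA)
  show "antilinear_involution sc SV \<phi>"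
    unfolding antilinear_involution_def
  proof (intro conjI ballI allI)
    fix a assume a: "a \<in> D"
    have aC: "a \<in> C" using a by simp
    have "EE (\<phi> a) = \<phi> (EE a)" using phi_Y[OF eC aC] pe by simp
    then show "\<phi> a \<in> D" using a phi_cl[OF aC] by simp
  next
    fix a b \<alpha> assume "a \<in> D" "b \<in> D" then show "\<phi> (sc \<alpha> a + b) = sc (cnj \<alpha>) (\<phi> a) + \<phi> b" using phi_lin by auto
  next
    fix a assume "a \<in> D" then show "\<phi> (\<phi> a) = a" using phi_phi by auto
  next
    show "\<phi> (vac SV) = vac SV" using pe by simp
    show "\<phi> (cv SV) = cv SV" using phi_Y[OF eC om_in] pe phi_cv by simp
  next
    fix a n b assume "a \<in> D" "b \<in> D" then show "\<phi> (Y SV a n b) = Y SV (\<phi> a) n (\<phi> b)" using phi_Y by auto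
  qed
  show "pos_hermitian_form sc D B"
    unfolding pos_hermitian_form_def
  proof (intro conjI ballI allI impI)
    fix u1 u2 v \<alpha> assume "u1 \<in> D" "u2 \<in> D" "v \<in> D"
    then show "B (sc \<alpha> u1 + u2) v = \<alpha> * B u1 v + B u2 v" using B_lin[of u1 u2 v \<alpha>] by simp
  next
    fix u v assume "u \<in> D" "v \<in> D"
    then show "B u v = cnj (B v u)" using B_herm[of u v] by simp
  next
    fix v assume "v \<in> D" "v \<noteq> 0"
    then show "0 < Re (B v v)" using B_pos[of v] by simp
  qed
  show "invariant_form sc SV \<phi> B"
    unfolding invariant_form_def
  proof (intro allI ballI)
    fix h a u v k assume a: "a \<in> wt sc SV h" and u: "u \<in> D" and v: "v \<in> D"
    have aW: "a \<in> W h" and aD: "a \<in> D" using a unfolding wtS by auto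
    have "B u (YY (\<phi> a) k v) = sgn_int (h * (h + 1) div 2) *
          fsum (\<lambda>j. (1 / of_nat (fact j)) * B (YY ((L 1 ^^ j) a) (h - k - 2 - int j) u) v)"
      using invf'[OF aW] u v by simp
    moreover have "(\<lambda>j. (1 / of_nat (fact j)) * B (YY ((L 1 ^^ j) a) (h - k - 2 - int j) u) v)
        = (\<lambda>j. (1 / of_nat (fact j)) * B (YY ((Lop SV 1 ^^ j) a) (h - k - 2 - int j) u) v)"
      using LopS_pow[OF aD] by simp
    ultimately show "B u (Y SV (\<phi> a) k v) = sgn_int (h * (h + 1) div 2) *
          fsum (\<lambda>j. (1 / of_nat (fact j)) * B (Y SV ((Lop SV 1 ^^ j) a) (h - k - 2 - int j) u) v)"
      by simp
  qed
qed

end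
end


lemma isoD:
  assumes "vosa_iso sc1 V sc2 W f"
  shows "bij_betw f (carrier V) (carrier W)"
    "\<And>a b \<alpha>. a \<in> carrier V \<Longrightarrow> b \<in> carrier V \<Longrightarrow> f (sc1 \<alpha> a + b) = sc2 \<alpha> (f a) + f b"
    "\<And>a n b. a \<in> carrier V \<Longrightarrow> b \<in> carrier V \<Longrightarrow> f (Y V a n b) = Y W (f a) n (f b)"
    "f (vac V) = vac W" "f (cv V) = cv W"
  using assms unfolding vosa_iso_def by blast+

lemma dsum_carrier: "carrier (dsum k Vs) = {f. (\<forall>i<k. f i \<in> carrier (Vs i)) \<and> (\<forall>i\<ge>k. f i = 0)}"
  unfolding dsum_def by simp
lemma dsum_Y: "Y (dsum k Vs) = (\<lambda>f n g i. if i < k then Y (Vs i) (f i) n (g i) else 0)"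
  unfolding dsum_def by simp
lemma dsum_vac: "vac (dsum k Vs) = (\<lambda>i. if i < k then vac (Vs i) else 0)"
  unfolding dsum_def by simp
lemma dsum_cv: "cv (dsum k Vs) = (\<lambda>i. if i < k then cv (Vs i) else 0)"
  unfolding dsum_def by simp

context vosa begin

lemma iso_single: "vosa_iso sc V (dscale sc) (dsum 1 (\<lambda>_. V)) (\<lambda>v i. if i < (1::nat) then v else 0)"
  unfolding vosa_iso_def
proof (intro conjI ballI allI)
  show "bij_betw (\<lambda>v i. if i < (1::nat) then v else 0) C (carrier (dsum 1 (\<lambda>_. V)))"
    unfolding bij_betw_def
  proof
    show "inj_on (\<lambda>v i. if i < (1::nat) then v else 0) C"
    proof (rule inj_onI)
      fix v w assume "(\<lambda>i. if i < (1::nat) then v else 0) = (\<lambda>i. if i < (1::nat) then w else 0)"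
      from fun_cong[OF this, of 0] show "v = w" by simp
    qed
    show "(\<lambda>v i. if i < (1::nat) then v else 0) ` C = carrier (dsum 1 (\<lambda>_. V))"
    proof
      show "(\<lambda>v i. if i < (1::nat) then v else 0) ` C \<subseteq> carrier (dsum 1 (\<lambda>_. V))"
        unfolding dsum_carrier by auto
      show "carrier (dsum 1 (\<lambda>_. V)) \<subseteq> (\<lambda>v i. if i < (1::nat) then v else 0) ` C"
      proof
        fix G assume G: "G \<in> carrier (dsum 1 (\<lambda>_. V))"
        then have G0: "G 0 \<in> C" and G1: "\<And>i. i \<ge> 1 \<Longrightarrow> G i = 0" unfolding dsum_carrier by auto
        have "G = (\<lambda>i. if i < (1::nat) then G 0 else 0)"
          by (rule ext) (use G1 in \<open>auto simp: less_one\<close>)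
        then show "G \<in> (\<lambda>v i. if i < (1::nat) then v else 0) ` C" using G0 by blast
      qed
    qed
  qed
next
  fix a b \<alpha> assume "a \<in> C" "b \<in> C"
  show "(\<lambda>i. if i < (1::nat) then sc \<alpha> a + b else 0) = dscale sc \<alpha> (\<lambda>i. if i < (1::nat) then a else 0) + (\<lambda>i. if i < (1::nat) then b else 0)"
    unfolding dscale_def by (rule ext) simp
next
  fix a n b assume "a \<in> C" "b \<in> C"
  show "(\<lambda>i. if i < (1::nat) then YY a n b else 0) = Y (dsum 1 (\<lambda>_. V)) (\<lambda>i. if i < (1::nat) then a else 0) n (\<lambda>i. if i < (1::nat) then b else 0)"
    unfolding dsum_Y by (rule ext) simp
next
  show "(\<lambda>i. if i < (1::nat) then one else 0) = vac (dsum 1 (\<lambda>_. V))" unfolding dsum_vac by simp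
  show "(\<lambda>i. if i < (1::nat) then om else 0) = cv (dsum 1 (\<lambda>_. V))" unfolding dsum_cv by simp
qed

lemma dim_lt:
  assumes A: "subspace A" "A \<subseteq> Bs" and S: "finite S" "Bs \<subseteq> span S" and r: "r \<in> Bs" "r \<notin> A"
  shows "dim A < dim Bs"
proof -
  obtain BA where BA: "BA \<subseteq> A" "independent BA" "A \<subseteq> span BA" "card BA = dim A" using basis_exists by blast
  obtain BB where BB: "BB \<subseteq> Bs" "independent BB" "Bs \<subseteq> span BB" "card BB = dim Bs" using basis_exists by blast
  have finBA: "finite BA" using independent_span_bound[OF S(1) BA(2)] BA(1) A(2) S(2) by blast
  have finBB: "finite BB" using independent_span_bound[OF S(1) BB(2)] BB(1) S(2) by blast
  have "span BA \<subseteq> A" using span_minimal[OF BA(1) A(1)] .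
  then have rn: "r \<notin> span BA" using r(2) by blast
  then have rnB: "r \<notin> BA" using span_superset by blast
  have ind: "independent (insert r BA)" using independent_insertI[OF rn BA(2)] .
  have "insert r BA \<subseteq> span BB" using BA(1) A(2) r(1) BB(3) by blast
  then have "card (insert r BA) \<le> card BB" using independent_span_bound[OF finBB ind] by blast
  moreover have "card (insert r BA) = Suc (card BA)" using finBA rnB by simp
  ultimately show ?thesis using BA(4) BB(4) by simp
qed

end

context uvosa begin

context
  fixes e f
  assumes eW: "e \<in> W 0" and fW: "f \<in> W 0" and efo: "e + f = one"
    and ee: "YY e (-1) e = e" and ff: "YY f (-1) f = f"
    and ef0: "YY e (-1) f = 0" and fe0: "YY f (-1) e = 0"
    and pe: "\<phi> e = e" and pf: "\<phi> f = f"
begin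

lemma eC': "e \<in> C" using eW wt_sub by blast
lemma fC': "f \<in> C" using fW wt_sub by blast

lemma EF_sum: "u \<in> C \<Longrightarrow> YY e (-1) u + YY f (-1) u = u"
  using Y_add1[OF eC' fC', of u "-1"] efo vac_Y by simp
lemma E_F: "u \<in> C \<Longrightarrow> YY e (-1) (YY f (-1) u) = 0"
  using E_assoc[OF eW ee pe fC', of u "-1"] ef0 by simp
lemma F_E: "u \<in> C \<Longrightarrow> YY f (-1) (YY e (-1) u) = 0"
  using E_assoc[OF fW ff pf eC', of u "-1"] fe0 by simp
lemma E_Y: "a \<in> C \<Longrightarrow> b \<in> C \<Longrightarrow> YY e (-1) (YY a n b) = YY (YY e (-1) a) n (YY e (-1) b)"
proof -
  assume a: "a \<in> C" and b: "b \<in> C"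
  have "YY (YY e (-1) a) n (YY e (-1) b) = YY e (-1) (YY a n (YY e (-1) b))"
    using E_assoc[OF eW ee pe a EE_C[OF eW ee pe b]] .
  also have "\<dots> = YY e (-1) (YY e (-1) (YY a n b))" using E_comm[OF eW ee pe a b] by simp
  also have "\<dots> = YY e (-1) (YY a n b)" using EE_idem[OF eW ee pe Ycl[OF a b]] .
  finally show ?thesis by simp
qed
lemma F_Y: "a \<in> C \<Longrightarrow> b \<in> C \<Longrightarrow> YY f (-1) (YY a n b) = YY (YY f (-1) a) n (YY f (-1) b)"
proof -
  assume a: "a \<in> C" and b: "b \<in> C"
  have "YY (YY f (-1) a) n (YY f (-1) b) = YY f (-1) (YY a n (YY f (-1) b))"
    using E_assoc[OF fW ff pf a EE_C[OF fW ff pf b]] .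
  also have "\<dots> = YY f (-1) (YY f (-1) (YY a n b))" using E_comm[OF fW ff pf a b] by simp
  also have "\<dots> = YY f (-1) (YY a n b)" using EE_idem[OF fW ff pf Ycl[OF a b]] .
  finally show ?thesis by simp
qed

lemma iso_combine:
  assumes g1: "vosa_iso sc (subv V e) (dscale sc) (dsum k1 Vs1) g1"
    and g2: "vosa_iso sc (subv V f) (dscale sc) (dsum k2 Vs2) g2"
  shows "vosa_iso sc V (dscale sc) (dsum (k1 + k2) (\<lambda>i. if i < k1 then Vs1 i else Vs2 (i - k1)))
     (\<lambda>v i. if i < k1 then g1 (YY e (-1) v) i else if i < k1 + k2 then g2 (YY f (-1) v) (i - k1) else 0)"
    (is "vosa_iso sc V (dscale sc) (dsum (k1 + k2) ?Vs) ?F")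
proof -
  let ?E = "YY e (-1)" and ?Fo = "YY f (-1)"
  note b1 = isoD(1)[OF g1] and l1 = isoD(2)[OF g1] and y1 = isoD(3)[OF g1] and v1 = isoD(4)[OF g1] and c1 = isoD(5)[OF g1]
  note b2 = isoD(1)[OF g2] and l2 = isoD(2)[OF g2] and y2 = isoD(3)[OF g2] and v2 = isoD(4)[OF g2] and c2 = isoD(5)[OF g2]
  have ED: "u \<in> C \<Longrightarrow> ?E u \<in> carrier (subv V e)" for u using EE_D[OF eW ee pe] by blast
  have FD: "u \<in> C \<Longrightarrow> ?Fo u \<in> carrier (subv V f)" for u using EE_D[OF fW ff pf] by blast
  have g1c: "u \<in> carrier (subv V e) \<Longrightarrow> g1 u \<in> carrier (dsum k1 Vs1)" for u using b1 unfolding bij_betw_def by blast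
  have g2c: "u \<in> carrier (subv V f) \<Longrightarrow> g2 u \<in> carrier (dsum k2 Vs2)" for u using b2 unfolding bij_betw_def by blast
  have Ec: "u \<in> C \<Longrightarrow> ?E u \<in> C" for u using EE_C[OF eW ee pe] .
  have Fc: "u \<in> C \<Longrightarrow> ?Fo u \<in> C" for u using EE_C[OF fW ff pf] .
  show ?thesis
    unfolding vosa_iso_def
  proof (intro conjI ballI allI)
    show "bij_betw ?F C (carrier (dsum (k1 + k2) ?Vs))"
      unfolding bij_betw_def
    proof
      show "inj_on ?F C"
      proof (rule inj_onI)
        fix v w assume v: "v \<in> C" and w: "w \<in> C" and eq: "?F v = ?F w"
        have "g1 (?E v) = g1 (?E w)"
        proof
          fix i show "g1 (?E v) i = g1 (?E w) i"
          proof (cases "i < k1")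
            case True then show ?thesis using fun_cong[OF eq, of i] by simp
          next
            case False then show ?thesis using g1c[OF ED[OF v]] g1c[OF ED[OF w]] unfolding dsum_carrier by simp
          qed
        qed
        then have e1: "?E v = ?E w" using b1 ED[OF v] ED[OF w] unfolding bij_betw_def inj_on_def by blast
        have "g2 (?Fo v) = g2 (?Fo w)"
        proof
          fix i show "g2 (?Fo v) i = g2 (?Fo w) i"
          proof (cases "i < k2")
            case True then show ?thesis using fun_cong[OF eq, of "i + k1"] by simp
          next
            case False then show ?thesis using g2c[OF FD[OF v]] g2c[OF FD[OF w]] unfolding dsum_carrier by simp
          qed
        qed
        then have e2: "?Fo v = ?Fo w" using b2 FD[OF v] FD[OF w] unfolding bij_betw_def inj_on_def by blast
        have "v = ?E v + ?Fo v" using EF_sum[OF v] by simp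
        also have "\<dots> = ?E w + ?Fo w" by (simp only: e1 e2)
        also have "\<dots> = w" using EF_sum[OF w] .
        finally show "v = w" .
      qed
      show "?F ` C = carrier (dsum (k1 + k2) ?Vs)"
      proof
        show "?F ` C \<subseteq> carrier (dsum (k1 + k2) ?Vs)"
        proof
          fix G assume "G \<in> ?F ` C"
          then obtain v where v: "v \<in> C" and G: "G = ?F v" by blast
          have A1: "\<forall>i<k1. g1 (?E v) i \<in> carrier (Vs1 i)" using g1c[OF ED[OF v]] unfolding dsum_carrier by blast
          have A2: "\<forall>i<k2. g2 (?Fo v) i \<in> carrier (Vs2 i)" using g2c[OF FD[OF v]] unfolding dsum_carrier by blast
          show "G \<in> carrier (dsum (k1 + k2) ?Vs)" unfolding dsum_carrier G using A1 A2 by auto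
        qed
        show "carrier (dsum (k1 + k2) ?Vs) \<subseteq> ?F ` C"
        proof
          fix G assume G: "G \<in> carrier (dsum (k1 + k2) ?Vs)"
          define G1 where "G1 = (\<lambda>i. if i < k1 then G i else 0)"
          define G2 where "G2 = (\<lambda>i. if i < k2 then G (i + k1) else 0)"
          have G1c: "G1 \<in> carrier (dsum k1 Vs1)"
          proof -
            have "\<forall>i<k1. G i \<in> carrier (Vs1 i)"
            proof (intro allI impI)
              fix i assume i: "i < k1"
              then have "i < k1 + k2" by simp
              then have "G i \<in> carrier (?Vs i)" using G unfolding dsum_carrier by blast
              then show "G i \<in> carrier (Vs1 i)" using i by simp
            qed
            then show ?thesis unfolding G1_def dsum_carrier by auto
          qed
          have G2c: "G2 \<in> carrier (dsum k2 Vs2)"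
          proof -
            have "\<forall>i<k2. G (i + k1) \<in> carrier (Vs2 i)"
            proof (intro allI impI)
              fix i assume "i < k2"
              then have "i + k1 < k1 + k2" by simp
              then have "G (i + k1) \<in> carrier (?Vs (i + k1))" using G unfolding dsum_carrier by blast
              then show "G (i + k1) \<in> carrier (Vs2 i)" by simp
            qed
            then show ?thesis unfolding G2_def dsum_carrier by auto
          qed
          have "G1 \<in> g1 ` carrier (subv V e)" using b1 G1c unfolding bij_betw_def by simp
          then obtain a where a: "a \<in> carrier (subv V e)" "g1 a = G1" by (metis imageE)
          have "G2 \<in> g2 ` carrier (subv V f)" using b2 G2c unfolding bij_betw_def by simp
          then obtain b where b: "b \<in> carrier (subv V f)" "g2 b = G2" by (metis imageE)
          have aC: "a \<in> C" and Ea: "?E a = a" using a(1) by auto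
          have bC: "b \<in> C" and Fb: "?Fo b = b" using b(1) by auto
          have Eb: "?E b = 0" using E_F[OF bC] Fb by simp
          have Fa: "?Fo a = 0" using F_E[OF aC] Ea by simp
          have Ev: "?E (a + b) = a" using Y_add2[OF eC' aC bC] Ea Eb by simp
          have Fv: "?Fo (a + b) = b" using Y_add2[OF fC' aC bC] Fa Fb by simp
          have "?F (a + b) = G"
          proof
            fix i
            show "?F (a + b) i = G i"
            proof (cases "i < k1")
              case True then show ?thesis using Ev a(2) G1_def by simp
            next
              case False
              show ?thesis
              proof (cases "i < k1 + k2")
                case True
                then have "i - k1 < k2" using False by simp
                then show ?thesis using False True Fv b(2) G2_def by simp
              next
                case F2: False
                then show ?thesis using False G unfolding dsum_carrier by simp
              qed
            qed
          qed
          then show "G \<in> ?F ` C" using Cadd[OF aC bC] by blast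
        qed
      qed
    qed
  next
    fix a b \<alpha> assume a: "a \<in> C" and b: "b \<in> C"
    have Ea: "?E (sc \<alpha> a + b) = sc \<alpha> (?E a) + ?E b" using Ylin2[OF eC' a b] .
    have Fa: "?Fo (sc \<alpha> a + b) = sc \<alpha> (?Fo a) + ?Fo b" using Ylin2[OF fC' a b] .
    have h1: "g1 (sc \<alpha> (?E a) + ?E b) = dscale sc \<alpha> (g1 (?E a)) + g1 (?E b)" using l1 ED a b by blast
    have h2: "g2 (sc \<alpha> (?Fo a) + ?Fo b) = dscale sc \<alpha> (g2 (?Fo a)) + g2 (?Fo b)" using l2 FD a b by blast
    show "?F (sc \<alpha> a + b) = dscale sc \<alpha> (?F a) + ?F b"
    proof
      fix i show "?F (sc \<alpha> a + b) i = (dscale sc \<alpha> (?F a) + ?F b) i"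
        using fun_cong[OF h1, of i] fun_cong[OF h2, of "i - k1"] Ea Fa unfolding dscale_def by simp
    qed
  next
    fix a n b assume a: "a \<in> C" and b: "b \<in> C"
    have h1: "g1 (?E (YY a n b)) = Y (dsum k1 Vs1) (g1 (?E a)) n (g1 (?E b))"
      using y1[OF ED[OF a] ED[OF b], of n] E_Y[OF a b] by simp
    have h2: "g2 (?Fo (YY a n b)) = Y (dsum k2 Vs2) (g2 (?Fo a)) n (g2 (?Fo b))"
      using y2[OF FD[OF a] FD[OF b], of n] F_Y[OF a b] by simp
    show "?F (YY a n b) = Y (dsum (k1 + k2) ?Vs) (?F a) n (?F b)"
    proof
      fix i show "?F (YY a n b) i = Y (dsum (k1 + k2) ?Vs) (?F a) n (?F b) i"
        using fun_cong[OF h1, of i] fun_cong[OF h2, of "i - k1"] unfolding dsum_Y by auto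
    qed
  next
    have h1: "g1 (?E one) = vac (dsum k1 Vs1)" using v1 creation[OF eC'] by simp
    have h2: "g2 (?Fo one) = vac (dsum k2 Vs2)" using v2 creation[OF fC'] by simp
    show "?F one = vac (dsum (k1 + k2) ?Vs)"
    proof
      fix i show "?F one i = vac (dsum (k1 + k2) ?Vs) i"
        using fun_cong[OF h1, of i] fun_cong[OF h2, of "i - k1"] unfolding dsum_vac by auto
    qed
    have h3: "g1 (?E om) = cv (dsum k1 Vs1)" using c1 by simp
    have h4: "g2 (?Fo om) = cv (dsum k2 Vs2)" using c2 by simp
    show "?F om = cv (dsum (k1 + k2) ?Vs)"
    proof
      fix i show "?F om i = cv (dsum (k1 + k2) ?Vs) i"
        using fun_cong[OF h3, of i] fun_cong[OF h4, of "i - k1"] unfolding dsum_cv by auto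
    qed
  qed
qed

end
end


lemma uvosaI:
  assumes "unitary_VOSA sc V c \<phi>"
  shows "\<exists>B. uvosa sc V c \<phi> B"
proof -
  have V: "is_VOSA sc V c" and A: "antilinear_involution sc V \<phi>"
    and "\<exists>B. pos_hermitian_form sc (carrier V) B \<and> invariant_form sc V \<phi> B"
    using assms unfolding unitary_VOSA_def by blast+
  then obtain B where B: "pos_hermitian_form sc (carrier V) B" "invariant_form sc V \<phi> B" by blast
  have vs: "vector_space sc" using V unfolding is_VOSA_def by blast
  have "uvosa sc V c \<phi> B"
    unfolding uvosa_def uvosa_axioms_def vosa_def vosa_axioms_def using vs V A B by blast
  then show ?thesis by blast
qed

lemma main_ind:
  fixes sc :: "complex \<Rightarrow> 'v::ab_group_add \<Rightarrow> 'v" and c :: complex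
  shows "\<forall>V \<phi>. unitary_VOSA sc V c \<phi> \<longrightarrow> vector_space.dim sc (wt sc V 0) = n \<longrightarrow>
           (\<exists>(k::nat) (Vs :: nat \<Rightarrow> 'v vosa).
           (\<forall>i<k. (\<exists>\<psi>. unitary_VOSA sc (Vs i) c \<psi>) \<and>
                  strong_CFT_type sc (Vs i) \<and> simple_VOSA sc (Vs i)) \<and>
           (\<exists>f. vosa_iso sc V (dscale sc) (dsum k Vs) f))"
proof (induction n rule: less_induct)
  case (less n)
  show ?case
  proof (intro allI impI)
    fix V \<phi> assume U: "unitary_VOSA sc V c \<phi>" and dn: "vector_space.dim sc (wt sc V 0) = n"
    obtain B where uB: "uvosa sc V c \<phi> B" using uvosaI[OF U] by blast
    interpret u: uvosa sc V c \<phi> B by (rule uB)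
    show "\<exists>(k::nat) (Vs :: nat \<Rightarrow> 'v vosa).
           (\<forall>i<k. (\<exists>\<psi>. unitary_VOSA sc (Vs i) c \<psi>) \<and>
                  strong_CFT_type sc (Vs i) \<and> simple_VOSA sc (Vs i)) \<and>
           (\<exists>f. vosa_iso sc V (dscale sc) (dsum k Vs) f)"
    proof (cases "wt sc V 0 \<subseteq> {sc \<alpha> (vac V) | \<alpha>. True}")
      case True
      have "\<forall>i<(1::nat). (\<exists>\<psi>. unitary_VOSA sc ((\<lambda>_. V) i) c \<psi>) \<and>
                  strong_CFT_type sc ((\<lambda>_. V) i) \<and> simple_VOSA sc ((\<lambda>_. V) i)"
        using U u.cft_when[OF True] u.simple_when[OF True] by blast
      moreover have "\<exists>f. vosa_iso sc V (dscale sc) (dsum 1 (\<lambda>_. V)) f" using u.iso_single by blast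
      ultimately show ?thesis by (intro exI[of _ "1::nat"] exI[of _ "\<lambda>_::nat. V"] conjI)
    next
      case False
      obtain e f where ef: "e \<in> wt sc V 0" "f \<in> wt sc V 0" "e + f = vac V" "Y V e (-1) e = e" "Y V f (-1) f = f"
        "Y V e (-1) f = 0" "Y V f (-1) e = 0" "\<phi> e = e" "\<phi> f = f" "e \<noteq> 0" "f \<noteq> 0"
        using u.split_exists[OF False] by blast
      obtain S where S: "finite S" "S \<subseteq> wt sc V 0" "wt sc V 0 \<subseteq> u.span S" using u.fin_wt by blast
      have Ue: "unitary_VOSA sc (subv V e) c \<phi>" using u.sub_unitary[OF ef(1) ef(4) ef(8)] .
      have Uf: "unitary_VOSA sc (subv V f) c \<phi>" using u.sub_unitary[OF ef(2) ef(5) ef(9)] .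
      have de: "vector_space.dim sc (wt sc (subv V e) 0) < n"
      proof -
        have w: "wt sc (subv V e) 0 = wt sc V 0 \<inter> carrier (subv V e)" using u.wtS[OF ef(1) ef(4) ef(8)] .
        have "u.dim (wt sc V 0 \<inter> carrier (subv V e)) < u.dim (wt sc V 0)"
        proof (rule u.dim_lt[OF _ _ S(1) S(3)])
          show "u.subspace (wt sc V 0 \<inter> carrier (subv V e))"
            using u.wt_subspace u.D_subspace[OF ef(1) ef(4) ef(8)] by (rule u.subspace_inter)
          show "wt sc V 0 \<inter> carrier (subv V e) \<subseteq> wt sc V 0" by blast
          show "f \<in> wt sc V 0" using ef(2) .
          show "f \<notin> wt sc V 0 \<inter> carrier (subv V e)" using ef(6) ef(11) by simp
        qed
        then show ?thesis using w dn by simp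
      qed
      have df: "vector_space.dim sc (wt sc (subv V f) 0) < n"
      proof -
        have w: "wt sc (subv V f) 0 = wt sc V 0 \<inter> carrier (subv V f)" using u.wtS[OF ef(2) ef(5) ef(9)] .
        have "u.dim (wt sc V 0 \<inter> carrier (subv V f)) < u.dim (wt sc V 0)"
        proof (rule u.dim_lt[OF _ _ S(1) S(3)])
          show "u.subspace (wt sc V 0 \<inter> carrier (subv V f))"
            using u.wt_subspace u.D_subspace[OF ef(2) ef(5) ef(9)] by (rule u.subspace_inter)
          show "wt sc V 0 \<inter> carrier (subv V f) \<subseteq> wt sc V 0" by blast
          show "e \<in> wt sc V 0" using ef(1) .
          show "e \<notin> wt sc V 0 \<inter> carrier (subv V f)" using ef(7) ef(10) by simp
        qed
        then show ?thesis using w dn by simp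
      qed
      obtain k1 Vs1 g1 where K1: "\<forall>i<k1. (\<exists>\<psi>. unitary_VOSA sc (Vs1 i) c \<psi>) \<and>
                  strong_CFT_type sc (Vs1 i) \<and> simple_VOSA sc (Vs1 i)"
        and g1: "vosa_iso sc (subv V e) (dscale sc) (dsum k1 Vs1) g1"
        using less.IH[OF de] Ue by blast
      obtain k2 Vs2 g2 where K2: "\<forall>i<k2. (\<exists>\<psi>. unitary_VOSA sc (Vs2 i) c \<psi>) \<and>
                  strong_CFT_type sc (Vs2 i) \<and> simple_VOSA sc (Vs2 i)"
        and g2: "vosa_iso sc (subv V f) (dscale sc) (dsum k2 Vs2) g2"
        using less.IH[OF df] Uf by blast
      define Vs where "Vs = (\<lambda>i. if i < k1 then Vs1 i else Vs2 (i - k1))"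
      have "\<forall>i<k1 + k2. (\<exists>\<psi>. unitary_VOSA sc (Vs i) c \<psi>) \<and>
                  strong_CFT_type sc (Vs i) \<and> simple_VOSA sc (Vs i)"
      proof (intro allI impI)
        fix i assume i: "i < k1 + k2"
        show "(\<exists>\<psi>. unitary_VOSA sc (Vs i) c \<psi>) \<and> strong_CFT_type sc (Vs i) \<and> simple_VOSA sc (Vs i)"
        proof (cases "i < k1")
          case True then show ?thesis using K1 unfolding Vs_def by simp
        next
          case False
          then have "i - k1 < k2" using i by simp
          then show ?thesis using K2 False unfolding Vs_def by simp
        qed
      qed
      moreover have "\<exists>F. vosa_iso sc V (dscale sc) (dsum (k1 + k2) Vs) F"
        unfolding Vs_def using u.iso_combine[OF ef(1) ef(2) ef(3) ef(4) ef(5) ef(6) ef(7) ef(8) ef(9) g1 g2] by blast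
      ultimately show ?thesis by (intro exI[of _ "k1 + k2"] exI[of _ Vs] conjI)
    qed
  qed
qed

theorem mainTheorem7:
  fixes sc :: "complex \<Rightarrow> 'v::ab_group_add \<Rightarrow> 'v"
    and V :: "'v vosa" and c :: complex and \<phi> :: "'v \<Rightarrow> 'v"
  assumes "unitary_VOSA sc V c \<phi>"
  shows "\<exists>(k::nat) (Vs :: nat \<Rightarrow> 'v vosa).
           (\<forall>i<k. (\<exists>\<psi>. unitary_VOSA sc (Vs i) c \<psi>) \<and>
                  strong_CFT_type sc (Vs i) \<and> simple_VOSA sc (Vs i)) \<and>
           (\<exists>f. vosa_iso sc V (dscale sc) (dsum k Vs) f)"
  using main_ind[of sc c "vector_space.dim sc (wt sc V 0)"] assms by blast


end
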